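(* Let $k$ be a field, let $B$ be a unital associative $k$-algebra and let $(J_i)_{i\in I}$ be a covering of $B$, i.e.\ a finite family of two-sided ideals of $B$ with $\bigcap_{i\in I}J_i=\{0\}$. For $i,j\in I$ put $B_i=B/J_i$, $B_{ij}=B/(J_i+J_j)$, with canonical surjections $\pi_i:B\to B_i$, $\pi_{ij}:B\to B_{ij}$, and let $\pi^i_j:B_i\to B_{ij}$, $b+J_i\mapsto b+J_i+J_j$. Let $A=\bigoplus_{i\in I}B_i$ (product algebra) and $\mathcal{C}=\bigoplus_{i,j\in I}B_{ij}$. Then $\mathcal{C}$ is an $A$-bimodule with actions $$(a_i)_{i\in I}\cdot(a_{jk})_{j,k\in I}\cdot(a'_l)_{l\in I}=\big(\pi^j_k(a_j)\,a_{jk}\,\pi^k_j(a'_k)\big)_{j,k\in I}$$ for $a_i,a'_i\in B_i$, $a_{jk}\in B_{jk}$, and $\mathcal{C}$ is an $A$-coring with coproduct $$\Delta_{\mathcal{C}}\big((\pi_{ij}(b_{ij}))_{i,j\in I}\big)=\sum_{k\in I}\big(\pi_{il}(b_{ik})\big)_{i,l\in I}\otimes_A\big(\pi_{mj}(\delta_{kj}1_B)\big)_{m,j\in I}$$ (equivalently $=\sum_{k\in I}\big(\pi_{il}(\delta_{ik}1_B)\big)_{i,l\in I}\otimes_A\big(\pi_{mj}(b_{kj})\big)_{m,j\in I}$) and counit $$\varepsilon_{\mathcal{C}}\big((\pi_{ij}(b_{ij}))_{i,j\in I}\big)=(\pi_i(b_{ii}))_{i\in I},$$ for all $b_{ij}\in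 B$; in particular these maps are well defined.
   Context: Here $\delta_{kj}1_B$ denotes $1_B$ if $k=j$ and $0$ otherwise. For a $k$-algebra $A$, an $A$-coring is an $A$-bimodule $\mathcal{C}$ together with $A$-bimodule maps $\Delta_{\mathcal{C}}:\mathcal{C}\to\mathcal{C}\otimes_A\mathcal{C}$ and $\varepsilon_{\mathcal{C}}:\mathcal{C}\to A$ such that $(\Delta_{\mathcal{C}}\otimes_A\mathrm{id})\circ\Delta_{\mathcal{C}}=(\mathrm{id}\otimes_A\Delta_{\mathcal{C}})\circ\Delta_{\mathcal{C}}$ and $(\varepsilon_{\mathcal{C}}\otimes_A\mathrm{id})\circ\Delta_{\mathcal{C}}=(\mathrm{id}\otimes_A\varepsilon_{\mathcal{C}})\circ\Delta_{\mathcal{C}}=\mathrm{id}_{\mathcal{C}}$ (with the canonical identifications $A\otimes_A\mathcal{C}\cong\mathcal{C}\cong\mathcal{C}\otimes_A A$). *)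

theory Defs
  imports "HOL-Library.FuncSet" "HOL-Library.Multiset"
begin

definition k_algebra :: "('k::field \<Rightarrow> 'b::ring_1 \<Rightarrow> 'b) \<Rightarrow> bool" where
  "k_algebra sc \<longleftrightarrow>
     (\<forall>x. sc 1 x = x) \<and>
     (\<forall>c d x. sc c (sc d x) = sc (c * d) x) \<and>
     (\<forall>c d x. sc (c + d) x = sc c x + sc d x) \<and>
     (\<forall>c x y. sc c (x + y) = sc c x + sc c y) \<and>
     (\<forall>c x y. sc c (x * y) = sc c x * y \<and> sc c (x * y) = x * sc c y)"

definition two_sided_ideal :: "'b::ring_1 set \<Rightarrow> bool" where
  "two_sided_ideal J \<longleftrightarrow>
     0 \<in> J \<and> (\<forall>x\<in>J. \<forall>y\<in>J. x + y \<in> J) \<and> (\<forall>x\<in>J. - x \<in> J) \<and>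
     (\<forall>x\<in>J. \<forall>b. b * x \<in> J \<and> x * b \<in> J)"

definition isum :: "'b::ring_1 set \<Rightarrow> 'b set \<Rightarrow> 'b set" where
  "isum J K = {x + y |x y. x \<in> J \<and> y \<in> K}"

definition cos :: "'b::ring_1 set \<Rightarrow> 'b \<Rightarrow> 'b set" where
  "cos J b = {b + x |x. x \<in> J}"   \<comment> \<open>canonical surjection B \<rightarrow> B/J, b \<mapsto> b + J\<close>

definition qcar :: "'b::ring_1 set \<Rightarrow> 'b set set" where
  "qcar J = range (cos J)"

definition rep :: "'b set \<Rightarrow> 'b" where
  "rep X = (SOME x. x \<in> X)"

definition qadd :: "'b::ring_1 set \<Rightarrow> 'b set \<Rightarrow> 'b set \<Rightarrow> 'b set" where
  "qadd K X Y = cos K (rep X + rep Y)"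

definition qmul :: "'b::ring_1 set \<Rightarrow> 'b set \<Rightarrow> 'b set \<Rightarrow> 'b set" where
  "qmul K X Y = cos K (rep X * rep Y)"

definition qneg :: "'b::ring_1 set \<Rightarrow> 'b set \<Rightarrow> 'b set" where
  "qneg K X = cos K (- rep X)"

definition JJ :: "('i \<Rightarrow> 'b::ring_1 set) \<Rightarrow> 'i \<times> 'i \<Rightarrow> 'b set" where
  "JJ J p = isum (J (fst p)) (J (snd p))"

text \<open>The map pi^j_k : B_j \<rightarrow> B_jk, b + J_j \<mapsto> b + J_j + J_k.\<close>
definition qlift :: "'b::ring_1 set \<Rightarrow> 'b set \<Rightarrow> 'b set" where
  "qlift K X = cos K (rep X)"

definition Acar :: "'i set \<Rightarrow> ('i \<Rightarrow> 'b::ring_1 set) \<Rightarrow> ('i \<Rightarrow> 'b set) set" where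
  "Acar I J = (\<Pi>\<^sub>E i\<in>I. qcar (J i))"

definition Aadd :: "'i set \<Rightarrow> ('i \<Rightarrow> 'b::ring_1 set) \<Rightarrow> ('i \<Rightarrow> 'b set) \<Rightarrow> ('i \<Rightarrow> 'b set) \<Rightarrow> ('i \<Rightarrow> 'b set)" where
  "Aadd I J a a' = (\<lambda>i\<in>I. qadd (J i) (a i) (a' i))"

definition Amul :: "'i set \<Rightarrow> ('i \<Rightarrow> 'b::ring_1 set) \<Rightarrow> ('i \<Rightarrow> 'b set) \<Rightarrow> ('i \<Rightarrow> 'b set) \<Rightarrow> ('i \<Rightarrow> 'b set)" where
  "Amul I J a a' = (\<lambda>i\<in>I. qmul (J i) (a i) (a' i))"

definition Aone :: "'i set \<Rightarrow> ('i \<Rightarrow> 'b::ring_1 set) \<Rightarrow> ('i \<Rightarrow> 'b set)" where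
  "Aone I J = (\<lambda>i\<in>I. cos (J i) 1)"

definition kA :: "('k \<Rightarrow> 'b::ring_1 \<Rightarrow> 'b) \<Rightarrow> 'i set \<Rightarrow> ('i \<Rightarrow> 'b set) \<Rightarrow> 'k \<Rightarrow> ('i \<Rightarrow> 'b set)" where
  "kA sc I J c = (\<lambda>i\<in>I. cos (J i) (sc c 1))"

definition Ccar :: "'i set \<Rightarrow> ('i \<Rightarrow> 'b::ring_1 set) \<Rightarrow> ('i \<times> 'i \<Rightarrow> 'b set) set" where
  "Ccar I J = (\<Pi>\<^sub>E p\<in>I \<times> I. qcar (JJ J p))"

definition Cadd :: "'i set \<Rightarrow> ('i \<Rightarrow> 'b::ring_1 set) \<Rightarrow> ('i \<times> 'i \<Rightarrow> 'b set) \<Rightarrow> ('i \<times> 'i \<Rightarrow> 'b set) \<Rightarrow> ('i \<times> 'i \<Rightarrow> 'b set)" where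
  "Cadd I J c c' = (\<lambda>p\<in>I \<times> I. qadd (JJ J p) (c p) (c' p))"

definition Czero :: "'i set \<Rightarrow> ('i \<Rightarrow> 'b::ring_1 set) \<Rightarrow> ('i \<times> 'i \<Rightarrow> 'b set)" where
  "Czero I J = (\<lambda>p\<in>I \<times> I. cos (JJ J p) 0)"

definition Cneg :: "'i set \<Rightarrow> ('i \<Rightarrow> 'b::ring_1 set) \<Rightarrow> ('i \<times> 'i \<Rightarrow> 'b set) \<Rightarrow> ('i \<times> 'i \<Rightarrow> 'b set)" where
  "Cneg I J c = (\<lambda>p\<in>I \<times> I. qneg (JJ J p) (c p))"

text \<open>Left action: (a . c)_{jk} = pi^j_k(a_j) c_{jk}; right action: (c . a')_{jk} = c_{jk} pi^k_j(a'_k).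
  (Note J_k + J_j = J_j + J_k.)\<close>
definition lact :: "'i set \<Rightarrow> ('i \<Rightarrow> 'b::ring_1 set) \<Rightarrow> ('i \<Rightarrow> 'b set) \<Rightarrow> ('i \<times> 'i \<Rightarrow> 'b set) \<Rightarrow> ('i \<times> 'i \<Rightarrow> 'b set)" where
  "lact I J a c = (\<lambda>p\<in>I \<times> I. qmul (JJ J p) (qlift (JJ J p) (a (fst p))) (c p))"

definition ract :: "'i set \<Rightarrow> ('i \<Rightarrow> 'b::ring_1 set) \<Rightarrow> ('i \<times> 'i \<Rightarrow> 'b set) \<Rightarrow> ('i \<Rightarrow> 'b set) \<Rightarrow> ('i \<times> 'i \<Rightarrow> 'b set)" where
  "ract I J c a = (\<lambda>p\<in>I \<times> I. qmul (JJ J p) (c p) (qlift (JJ J p) (a (snd p))))"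

definition bimodule ::
  "'a set \<Rightarrow> ('a \<Rightarrow> 'a \<Rightarrow> 'a) \<Rightarrow> ('a \<Rightarrow> 'a \<Rightarrow> 'a) \<Rightarrow> 'a \<Rightarrow>
   'm set \<Rightarrow> ('m \<Rightarrow> 'm \<Rightarrow> 'm) \<Rightarrow> 'm \<Rightarrow> ('m \<Rightarrow> 'm) \<Rightarrow> ('a \<Rightarrow> 'm \<Rightarrow> 'm) \<Rightarrow> ('m \<Rightarrow> 'a \<Rightarrow> 'm) \<Rightarrow> bool" where
  "bimodule SA addA mulA oneA SM addM zeroM negM l r \<longleftrightarrow>
     zeroM \<in> SM \<and> (\<forall>x\<in>SM. \<forall>y\<in>SM. addM x y \<in> SM) \<and> (\<forall>x\<in>SM. negM x \<in> SM) \<and>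
     (\<forall>x\<in>SM. \<forall>y\<in>SM. \<forall>z\<in>SM. addM (addM x y) z = addM x (addM y z)) \<and>
     (\<forall>x\<in>SM. \<forall>y\<in>SM. addM x y = addM y x) \<and>
     (\<forall>x\<in>SM. addM zeroM x = x) \<and> (\<forall>x\<in>SM. addM (negM x) x = zeroM) \<and>
     (\<forall>a\<in>SA. \<forall>x\<in>SM. l a x \<in> SM \<and> r x a \<in> SM) \<and>
     (\<forall>a\<in>SA. \<forall>b\<in>SA. \<forall>x\<in>SM. l (mulA a b) x = l a (l b x) \<and> r x (mulA a b) = r (r x a) b) \<and>
     (\<forall>x\<in>SM. l oneA x = x \<and> r x oneA = x) \<and>
     (\<forall>a\<in>SA. \<forall>x\<in>SM. \<forall>y\<in>SM. l a (addM x y) = addM (l a x) (l a y) \<and>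
                             r (addM x y) a = addM (r x a) (r y a)) \<and>
     (\<forall>a\<in>SA. \<forall>b\<in>SA. \<forall>x\<in>SM. l (addA a b) x = addM (l a x) (l b x) \<and>
                             r x (addA a b) = addM (r x a) (r x b)) \<and>
     (\<forall>a\<in>SA. \<forall>b\<in>SA. \<forall>x\<in>SM. r (l a x) b = l a (r x b))"

inductive_set zspan :: "('p \<Rightarrow> int) set \<Rightarrow> ('p \<Rightarrow> int) set" for G where
  zero: "(\<lambda>_. 0) \<in> zspan G"
| gen: "g \<in> G \<Longrightarrow> g \<in> zspan G"
| add: "x \<in> zspan G \<Longrightarrow> y \<in> zspan G \<Longrightarrow> (\<lambda>p. x p + y p) \<in> zspan G"
| neg: "x \<in> zspan G \<Longrightarrow> (\<lambda>p. - x p) \<in> zspan G"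

definition ind :: "'p \<Rightarrow> 'p \<Rightarrow> int" where
  "ind p = (\<lambda>q. if q = p then 1 else 0)"

text \<open>Relations defining M \<otimes>_A M (free abelian group on M \<times> M modulo biadditivity and
  A-balancedness).\<close>
definition gens2 :: "'a set \<Rightarrow> 'm set \<Rightarrow> ('m \<Rightarrow> 'm \<Rightarrow> 'm) \<Rightarrow> ('a \<Rightarrow> 'm \<Rightarrow> 'm) \<Rightarrow> ('m \<Rightarrow> 'a \<Rightarrow> 'm)
   \<Rightarrow> ('m \<times> 'm \<Rightarrow> int) set" where
  "gens2 SA SM addM l r =
     {(\<lambda>q. ind (addM x x', y) q - ind (x, y) q - ind (x', y) q) |x x' y. x \<in> SM \<and> x' \<in> SM \<and> y \<in> SM} \<union>
     {(\<lambda>q. ind (x, addM y y') q - ind (x, y) q - ind (x, y') q) |x y y'. x \<in> SM \<and> y \<in> SM \<and> y' \<in> SM} \<union>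
     {(\<lambda>q. ind (r x a, y) q - ind (x, l a y) q) |x a y. x \<in> SM \<and> a \<in> SA \<and> y \<in> SM}"

definition gens3 :: "'a set \<Rightarrow> 'm set \<Rightarrow> ('m \<Rightarrow> 'm \<Rightarrow> 'm) \<Rightarrow> ('a \<Rightarrow> 'm \<Rightarrow> 'm) \<Rightarrow> ('m \<Rightarrow> 'a \<Rightarrow> 'm)
   \<Rightarrow> ('m \<times> 'm \<times> 'm \<Rightarrow> int) set" where
  "gens3 SA SM addM l r =
     {(\<lambda>q. ind (addM x x', y, z) q - ind (x, y, z) q - ind (x', y, z) q) |x x' y z.
        x \<in> SM \<and> x' \<in> SM \<and> y \<in> SM \<and> z \<in> SM} \<union>
     {(\<lambda>q. ind (x, addM y y', z) q - ind (x, y, z) q - ind (x, y', z) q) |x y y' z.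
        x \<in> SM \<and> y \<in> SM \<and> y' \<in> SM \<and> z \<in> SM} \<union>
     {(\<lambda>q. ind (x, y, addM z z') q - ind (x, y, z) q - ind (x, y, z') q) |x y z z'.
        x \<in> SM \<and> y \<in> SM \<and> z \<in> SM \<and> z' \<in> SM} \<union>
     {(\<lambda>q. ind (r x a, y, z) q - ind (x, l a y, z) q) |x a y z.
        x \<in> SM \<and> a \<in> SA \<and> y \<in> SM \<and> z \<in> SM} \<union>
     {(\<lambda>q. ind (x, r y a, z) q - ind (x, y, l a z) q) |x y a z.
        x \<in> SM \<and> y \<in> SM \<and> a \<in> SA \<and> z \<in> SM}"

text \<open>Formal sums of elementary tensors are finite multisets of tuples; two formal sums
  (supported in the carrier) represent the same tensor iff their difference lies in the
  relation subgroup.\<close>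
definition teq2 :: "'a set \<Rightarrow> 'm set \<Rightarrow> ('m \<Rightarrow> 'm \<Rightarrow> 'm) \<Rightarrow> ('a \<Rightarrow> 'm \<Rightarrow> 'm) \<Rightarrow> ('m \<Rightarrow> 'a \<Rightarrow> 'm)
   \<Rightarrow> ('m \<times> 'm) multiset \<Rightarrow> ('m \<times> 'm) multiset \<Rightarrow> bool" where
  "teq2 SA SM addM l r X Y \<longleftrightarrow>
     set_mset X \<subseteq> SM \<times> SM \<and> set_mset Y \<subseteq> SM \<times> SM \<and>
     (\<lambda>q. int (count X q) - int (count Y q)) \<in> zspan (gens2 SA SM addM l r)"

definition teq3 :: "'a set \<Rightarrow> 'm set \<Rightarrow> ('m \<Rightarrow> 'm \<Rightarrow> 'm) \<Rightarrow> ('a \<Rightarrow> 'm \<Rightarrow> 'm) \<Rightarrow> ('m \<Rightarrow> 'a \<Rightarrow> 'm)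
   \<Rightarrow> ('m \<times> 'm \<times> 'm) multiset \<Rightarrow> ('m \<times> 'm \<times> 'm) multiset \<Rightarrow> bool" where
  "teq3 SA SM addM l r X Y \<longleftrightarrow>
     set_mset X \<subseteq> SM \<times> SM \<times> SM \<and> set_mset Y \<subseteq> SM \<times> SM \<times> SM \<and>
     (\<lambda>q. int (count X q) - int (count Y q)) \<in> zspan (gens3 SA SM addM l r)"

definition msum :: "('m \<Rightarrow> 'm \<Rightarrow> 'm) \<Rightarrow> 'm \<Rightarrow> 'm multiset \<Rightarrow> 'm" where
  "msum add z X = foldr add (SOME xs. mset xs = X) z"

text \<open>An A-coring: the coproduct Delta c is given by a formal sum representing an element
  of C \<otimes>_A C; Delta and eps are A-bimodule maps; coassociativity (in C \<otimes>_A C \<otimes>_A C)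
  and counitality (via A \<otimes>_A C \<cong> C \<cong> C \<otimes>_A A).\<close>
definition coring ::
  "'a set \<Rightarrow> ('a \<Rightarrow> 'a \<Rightarrow> 'a) \<Rightarrow> ('a \<Rightarrow> 'a \<Rightarrow> 'a) \<Rightarrow> 'a \<Rightarrow>
   'm set \<Rightarrow> ('m \<Rightarrow> 'm \<Rightarrow> 'm) \<Rightarrow> 'm \<Rightarrow> ('m \<Rightarrow> 'm) \<Rightarrow> ('a \<Rightarrow> 'm \<Rightarrow> 'm) \<Rightarrow> ('m \<Rightarrow> 'a \<Rightarrow> 'm) \<Rightarrow>
   ('m \<Rightarrow> ('m \<times> 'm) multiset) \<Rightarrow> ('m \<Rightarrow> 'a) \<Rightarrow> bool" where
  "coring SA addA mulA oneA SM addM zeroM negM l r Delta eps \<longleftrightarrow>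
     bimodule SA addA mulA oneA SM addM zeroM negM l r \<and>
     (\<forall>c\<in>SM. set_mset (Delta c) \<subseteq> SM \<times> SM) \<and>
     (\<forall>c\<in>SM. eps c \<in> SA) \<and>
     (\<forall>c\<in>SM. \<forall>c'\<in>SM. teq2 SA SM addM l r (Delta (addM c c')) (Delta c + Delta c')) \<and>
     (\<forall>a\<in>SA. \<forall>a'\<in>SA. \<forall>c\<in>SM. teq2 SA SM addM l r (Delta (l a (r c a')))
         (image_mset (\<lambda>(x, y). (l a x, r y a')) (Delta c))) \<and>
     (\<forall>c\<in>SM. \<forall>c'\<in>SM. eps (addM c c') = addA (eps c) (eps c')) \<and>
     (\<forall>a\<in>SA. \<forall>a'\<in>SA. \<forall>c\<in>SM. eps (l a (r c a')) = mulA a (mulA (eps c) a')) \<and>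
     (\<forall>c\<in>SM. teq3 SA SM addM l r
         (sum_mset (image_mset (\<lambda>(x, y). image_mset (\<lambda>(u, v). (u, v, y)) (Delta x)) (Delta c)))
         (sum_mset (image_mset (\<lambda>(x, y). image_mset (\<lambda>(u, v). (x, u, v)) (Delta y)) (Delta c)))) \<and>
     (\<forall>c\<in>SM. msum addM zeroM (image_mset (\<lambda>(x, y). l (eps x) y) (Delta c)) = c) \<and>
     (\<forall>c\<in>SM. msum addM zeroM (image_mset (\<lambda>(x, y). r x (eps y)) (Delta c)) = c)"

definition DeltaF :: "'i set \<Rightarrow> ('i \<Rightarrow> 'b::ring_1 set) \<Rightarrow> ('i \<times> 'i \<Rightarrow> 'b)
   \<Rightarrow> (('i \<times> 'i \<Rightarrow> 'b set) \<times> ('i \<times> 'i \<Rightarrow> 'b set)) multiset" where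
  "DeltaF I J b = {# ((\<lambda>p\<in>I \<times> I. cos (JJ J p) (b (fst p, k))),
                     (\<lambda>p\<in>I \<times> I. cos (JJ J p) (if k = snd p then 1 else 0))). k \<in># mset_set I #}"

definition DeltaF' :: "'i set \<Rightarrow> ('i \<Rightarrow> 'b::ring_1 set) \<Rightarrow> ('i \<times> 'i \<Rightarrow> 'b)
   \<Rightarrow> (('i \<times> 'i \<Rightarrow> 'b set) \<times> ('i \<times> 'i \<Rightarrow> 'b set)) multiset" where
  "DeltaF' I J b = {# ((\<lambda>p\<in>I \<times> I. cos (JJ J p) (if fst p = k then 1 else 0)),
                      (\<lambda>p\<in>I \<times> I. cos (JJ J p) (b (k, snd p)))). k \<in># mset_set I #}"

definition epsF :: "'i set \<Rightarrow> ('i \<Rightarrow> 'b::ring_1 set) \<Rightarrow> ('i \<times> 'i \<Rightarrow> 'b) \<Rightarrow> ('i \<Rightarrow> 'b set)" where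
  "epsF I J b = (\<lambda>i\<in>I. cos (J i) (b (i, i)))"

definition DeltaC :: "'i set \<Rightarrow> ('i \<Rightarrow> 'b::ring_1 set) \<Rightarrow> ('i \<times> 'i \<Rightarrow> 'b set)
   \<Rightarrow> (('i \<times> 'i \<Rightarrow> 'b set) \<times> ('i \<times> 'i \<Rightarrow> 'b set)) multiset" where
  "DeltaC I J c = DeltaF I J (\<lambda>p. rep (c p))"

definition epsC :: "'i set \<Rightarrow> ('i \<Rightarrow> 'b::ring_1 set) \<Rightarrow> ('i \<times> 'i \<Rightarrow> 'b set) \<Rightarrow> ('i \<Rightarrow> 'b set)" where
  "epsC I J c = epsF I J (\<lambda>p. rep (c p))"

end

theory Submission
  imports Defs
begin

section \<open>Ideals and congruences\<close>

lemma ideal_add: "two_sided_ideal K \<Longrightarrow> x \<in> K \<Longrightarrow> y \<in> K \<Longrightarrow> x + y \<in> K"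
  by (simp add: two_sided_ideal_def)
lemma ideal_neg: "two_sided_ideal K \<Longrightarrow> x \<in> K \<Longrightarrow> - x \<in> K"
  by (simp add: two_sided_ideal_def)
lemma ideal_zero: "two_sided_ideal K \<Longrightarrow> 0 \<in> K"
  by (simp add: two_sided_ideal_def)
lemma ideal_diff: "two_sided_ideal K \<Longrightarrow> x \<in> K \<Longrightarrow> y \<in> K \<Longrightarrow> x - y \<in> K"
  using ideal_add[of K x "- y"] ideal_neg[of K y] by simp
lemma ideal_multL: "two_sided_ideal K \<Longrightarrow> x \<in> K \<Longrightarrow> b * x \<in> K"
  by (simp add: two_sided_ideal_def)
lemma ideal_multR: "two_sided_ideal K \<Longrightarrow> x \<in> K \<Longrightarrow> x * b \<in> K"
  by (simp add: two_sided_ideal_def)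

lemma isum_ideal:
  assumes "two_sided_ideal J" "two_sided_ideal K" shows "two_sided_ideal (isum J K)"
proof -
  have "0 = (0::'a) + 0" by simp
  then have "0 \<in> isum J K" unfolding isum_def using assms ideal_zero by blast
  moreover have "\<forall>x\<in>isum J K. \<forall>y\<in>isum J K. x + y \<in> isum J K"
  proof (intro ballI)
    fix x y assume "x \<in> isum J K" "y \<in> isum J K"
    then obtain a b c d where "x = a + b" "y = c + d" "a \<in> J" "b \<in> K" "c \<in> J" "d \<in> K"
      unfolding isum_def by blast
    then have "x + y = (a + c) + (b + d)" by (simp add: algebra_simps)
    then show "x + y \<in> isum J K" unfolding isum_def
      using \<open>a \<in> J\<close> \<open>b \<in> K\<close> \<open>c \<in> J\<close> \<open>d \<in> K\<close> assms by (blast intro: ideal_add)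
  qed
  moreover have "\<forall>x\<in>isum J K. - x \<in> isum J K"
  proof
    fix x assume "x \<in> isum J K"
    then obtain a b where "x = a + b" "a \<in> J" "b \<in> K" unfolding isum_def by blast
    then have "- x = (- a) + (- b)" by (simp add: algebra_simps)
    then show "- x \<in> isum J K" unfolding isum_def
      using \<open>a \<in> J\<close> \<open>b \<in> K\<close> assms by (blast intro: ideal_neg)
  qed
  moreover have "\<forall>x\<in>isum J K. \<forall>y. y * x \<in> isum J K \<and> x * y \<in> isum J K"
  proof (intro ballI allI)
    fix x y assume "x \<in> isum J K"
    then obtain a b where "x = a + b" "a \<in> J" "b \<in> K" unfolding isum_def by blast
    then have "y * x = y * a + y * b" "x * y = a * y + b * y" by (simp_all add: algebra_simps)
    then show "y * x \<in> isum J K \<and> x * y \<in> isum J K" unfolding isum_def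
      using \<open>a \<in> J\<close> \<open>b \<in> K\<close> assms by (blast intro: ideal_multL ideal_multR)
  qed
  ultimately show ?thesis unfolding two_sided_ideal_def by blast
qed

lemma isum_subL: "two_sided_ideal K \<Longrightarrow> J \<subseteq> isum J K"
  unfolding isum_def by (force dest: ideal_zero)
lemma isum_subR: "two_sided_ideal J \<Longrightarrow> K \<subseteq> isum J K"
  unfolding isum_def by (force dest: ideal_zero)
lemma isum_mono: "J \<subseteq> J' \<Longrightarrow> K \<subseteq> K' \<Longrightarrow> isum J K \<subseteq> isum J' K'"
  unfolding isum_def by blast
lemma isum_self: "two_sided_ideal J \<Longrightarrow> isum J J = J"
  apply (rule antisym)
   apply (force simp: isum_def intro: ideal_add)
  by (rule isum_subL)

definition md :: "'b::ring_1 set \<Rightarrow> 'b \<Rightarrow> 'b \<Rightarrow> bool" where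
  "md K x y \<longleftrightarrow> x - y \<in> K"

lemma md_refl: "two_sided_ideal K \<Longrightarrow> md K x x"
  by (simp add: md_def ideal_zero)
lemma md_eq: "two_sided_ideal K \<Longrightarrow> x = y \<Longrightarrow> md K x y"
  by (simp add: md_def ideal_zero)
lemma md_sym: "two_sided_ideal K \<Longrightarrow> md K x y \<Longrightarrow> md K y x"
  unfolding md_def by (metis ideal_neg minus_diff_eq)
lemma md_trans: "two_sided_ideal K \<Longrightarrow> md K x y \<Longrightarrow> md K y z \<Longrightarrow> md K x z"
  unfolding md_def by (metis ideal_add diff_add_cancel add_diff_eq diff_diff_eq2 add.commute)
lemma md_add: "two_sided_ideal K \<Longrightarrow> md K a c \<Longrightarrow> md K b d \<Longrightarrow> md K (a + b) (c + d)"
  unfolding md_def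
proof -
  assume "two_sided_ideal K" "a - c \<in> K" "b - d \<in> K"
  moreover have "a + b - (c + d) = (a - c) + (b - d)" by (simp add: algebra_simps)
  ultimately show "a + b - (c + d) \<in> K" by (metis ideal_add)
qed
lemma md_neg: "two_sided_ideal K \<Longrightarrow> md K a c \<Longrightarrow> md K (- a) (- c)"
  unfolding md_def by (metis ideal_neg minus_diff_eq diff_minus_eq_add add.commute diff_conv_add_uminus)
lemma md_diff: "two_sided_ideal K \<Longrightarrow> md K a c \<Longrightarrow> md K b d \<Longrightarrow> md K (a - b) (c - d)"
  using md_add[of K a c "- b" "- d"] md_neg[of K b d] by simp
lemma md_mul: "two_sided_ideal K \<Longrightarrow> md K a c \<Longrightarrow> md K b d \<Longrightarrow> md K (a * b) (c * d)"
  unfolding md_def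
proof -
  assume "two_sided_ideal K" "a - c \<in> K" "b - d \<in> K"
  moreover have "a * b - c * d = (a - c) * b + c * (b - d)" by (simp add: algebra_simps)
  ultimately show "a * b - c * d \<in> K" by (simp add: ideal_add ideal_multL ideal_multR)
qed
lemma md_sum: "two_sided_ideal K \<Longrightarrow> (\<And>t. t \<in> T \<Longrightarrow> md K (f t) (g t)) \<Longrightarrow> md K (sum f T) (sum g T)"
  by (induction T rule: infinite_finite_induct) (auto simp: md_refl md_add)
lemma md_mono: "md K x y \<Longrightarrow> K \<subseteq> K' \<Longrightarrow> md K' x y"
  unfolding md_def by blast

lemma cos_mem: "two_sided_ideal K \<Longrightarrow> x \<in> cos K x"
  unfolding cos_def by (force dest: ideal_zero)
lemma rep_cos: "two_sided_ideal K \<Longrightarrow> md K (rep (cos K x)) x"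
proof -
  assume K: "two_sided_ideal K"
  have "rep (cos K x) \<in> cos K x" unfolding rep_def by (rule someI, rule cos_mem[OF K])
  then obtain k where "rep (cos K x) = x + k" "k \<in> K" unfolding cos_def by blast
  then show ?thesis unfolding md_def by simp
qed
lemma cos_eq_iff: "two_sided_ideal K \<Longrightarrow> cos K x = cos K y \<longleftrightarrow> md K x y"
proof
  assume K: "two_sided_ideal K" and e: "cos K x = cos K y"
  have "x \<in> cos K y" using cos_mem[OF K, of x] e by simp
  then obtain k where "x = y + k" "k \<in> K" unfolding cos_def by blast
  then show "md K x y" unfolding md_def by simp
next
  assume K: "two_sided_ideal K" and m: "md K x y"
  show "cos K x = cos K y"
  proof -
    have "cos K x \<subseteq> cos K y" if "md K x y" for x y
    proof
      fix z assume "z \<in> cos K x"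
      then obtain k where "z = x + k" "k \<in> K" unfolding cos_def by blast
      then have "z = y + ((x - y) + k)" by (simp add: algebra_simps)
      moreover have "(x - y) + k \<in> K" using that \<open>k \<in> K\<close> K unfolding md_def by (simp add: ideal_add)
      ultimately show "z \<in> cos K y" unfolding cos_def by blast
    qed
    then show ?thesis using m md_sym[OF K m] by blast
  qed
qed
lemma cos_rep: "two_sided_ideal K \<Longrightarrow> X \<in> qcar K \<Longrightarrow> cos K (rep X) = X"
  unfolding qcar_def using rep_cos cos_eq_iff by fastforce


section \<open>Generic formal-sum congruence\<close>

definition teqG :: "('q \<Rightarrow> int) set \<Rightarrow> 'q set \<Rightarrow> 'q multiset \<Rightarrow> 'q multiset \<Rightarrow> bool" where
  "teqG G S X Y \<longleftrightarrow> set_mset X \<subseteq> S \<and> set_mset Y \<subseteq> S \<and>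
     (\<lambda>q. int (count X q) - int (count Y q)) \<in> zspan G"

lemma teq2_G: "teq2 SA SM addM l r X Y = teqG (gens2 SA SM addM l r) (SM \<times> SM) X Y"
  by (simp add: teq2_def teqG_def)
lemma teq3_G: "teq3 SA SM addM l r X Y = teqG (gens3 SA SM addM l r) (SM \<times> SM \<times> SM) X Y"
  by (simp add: teq3_def teqG_def)

lemma zspan_diff: "x \<in> zspan G \<Longrightarrow> y \<in> zspan G \<Longrightarrow> (\<lambda>p. x p - y p) \<in> zspan G"
proof -
  assume "x \<in> zspan G" "y \<in> zspan G"
  then have "(\<lambda>p. x p + - y p) \<in> zspan G" by (intro zspan.add zspan.neg)
  then show ?thesis by simp
qed

lemma teqG_refl: "set_mset X \<subseteq> S \<Longrightarrow> teqG G S X X"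
  unfolding teqG_def using zspan.zero by simp

lemma teqG_sym: "teqG G S X Y \<Longrightarrow> teqG G S Y X"
  unfolding teqG_def
proof (elim conjE, intro conjI)
  assume "(\<lambda>q. int (count X q) - int (count Y q)) \<in> zspan G"
  then have "(\<lambda>q. - (int (count X q) - int (count Y q))) \<in> zspan G" by (rule zspan.neg)
  then show "(\<lambda>q. int (count Y q) - int (count X q)) \<in> zspan G" by simp
qed

lemma teqG_trans: "teqG G S X Y \<Longrightarrow> teqG G S Y Z \<Longrightarrow> teqG G S X Z"
  unfolding teqG_def
proof (elim conjE, intro conjI)
  assume "(\<lambda>q. int (count X q) - int (count Y q)) \<in> zspan G"
    "(\<lambda>q. int (count Y q) - int (count Z q)) \<in> zspan G"
  then have "(\<lambda>q. (int (count X q) - int (count Y q)) + (int (count Y q) - int (count Z q))) \<in> zspan G"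
    by (rule zspan.add)
  then show "(\<lambda>q. int (count X q) - int (count Z q)) \<in> zspan G" by simp
qed

lemma teqG_add: "teqG G S X Y \<Longrightarrow> teqG G S X' Y' \<Longrightarrow> teqG G S (X + X') (Y + Y')"
  unfolding teqG_def
proof (elim conjE, intro conjI)
  assume "(\<lambda>q. int (count X q) - int (count Y q)) \<in> zspan G"
    "(\<lambda>q. int (count X' q) - int (count Y' q)) \<in> zspan G"
  then have "(\<lambda>q. (int (count X q) - int (count Y q)) + (int (count X' q) - int (count Y' q))) \<in> zspan G"
    by (rule zspan.add)
  then show "(\<lambda>q. int (count (X + X') q) - int (count (Y + Y') q)) \<in> zspan G" by (simp add: algebra_simps)
qed auto

lemma teqG_cancel: "teqG G S (X + Z) (Y + Z) \<Longrightarrow> teqG G S X Y"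
  unfolding teqG_def by auto

lemma teqG_sum: "(\<And>t. t \<in> T \<Longrightarrow> teqG G S (F t) (H t)) \<Longrightarrow> teqG G S (sum F T) (sum H T)"
proof (induction T rule: infinite_finite_induct)
  case (infinite A) then show ?case by (simp add: teqG_refl)
next
  case empty then show ?case by (simp add: teqG_refl)
next
  case (insert x F) then show ?case by (simp add: teqG_add)
qed

lemma teqG_gen: "g \<in> G \<Longrightarrow> set_mset X \<subseteq> S \<Longrightarrow> set_mset Y \<subseteq> S \<Longrightarrow>
    (\<lambda>q. int (count X q) - int (count Y q)) = g \<Longrightarrow> teqG G S X Y"
  unfolding teqG_def by (auto intro: zspan.gen)

lemma cnt_2: "(\<lambda>q. int (count {#u#} q) - int (count {#v#} q)) = (\<lambda>q. ind u q - ind v q)"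
  by (simp add: ind_def fun_eq_iff)
lemma cnt_3: "(\<lambda>q. int (count {#u#} q) - int (count {#v, w#} q)) = (\<lambda>q. ind u q - ind v q - ind w q)"
  by (simp add: ind_def fun_eq_iff)

lemma gen1:
  assumes "x \<in> SM" "x' \<in> SM" "y \<in> SM" "addM x x' \<in> SM"
  shows "teq2 SA SM addM l r {#(addM x x', y)#} {#(x, y), (x', y)#}"
  unfolding teq2_G
  apply (rule teqG_gen[where g = "\<lambda>q. ind (addM x x', y) q - ind (x, y) q - ind (x', y) q"])
  subgoal unfolding gens2_def using assms by blast
  using assms by (simp_all only: cnt_2 cnt_3) auto

lemma gen2:
  assumes "x \<in> SM" "y \<in> SM" "y' \<in> SM" "addM y y' \<in> SM"
  shows "teq2 SA SM addM l r {#(x, addM y y')#} {#(x, y), (x, y')#}"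
  unfolding teq2_G
  apply (rule teqG_gen[where g = "\<lambda>q. ind (x, addM y y') q - ind (x, y) q - ind (x, y') q"])
  subgoal unfolding gens2_def using assms by blast
  using assms by (simp_all only: cnt_2 cnt_3) auto

lemma gen3:
  assumes "x \<in> SM" "a \<in> SA" "y \<in> SM" "r x a \<in> SM" "l a y \<in> SM"
  shows "teq2 SA SM addM l r {#(r x a, y)#} {#(x, l a y)#}"
  unfolding teq2_G
  apply (rule teqG_gen[where g = "\<lambda>q. ind (r x a, y) q - ind (x, l a y) q"])
  subgoal unfolding gens2_def using assms by blast
  using assms by (simp_all only: cnt_2 cnt_3) auto

section \<open>Lifting 2-tensors to 3-tensors\<close>

definition push :: "('q \<Rightarrow> 'r) \<Rightarrow> ('q \<Rightarrow> int) \<Rightarrow> 'r \<Rightarrow> int" where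
  "push f d = (\<lambda>q'. if q' \<in> range f then d (inv f q') else 0)"

lemma zspan_push:
  assumes "d \<in> zspan G" "\<And>g. g \<in> G \<Longrightarrow> push f g \<in> zspan G'"
  shows "push f d \<in> zspan G'"
  using assms(1)
proof induction
  case zero
  have "push f (\<lambda>_. 0) = (\<lambda>_. 0)" by (simp add: push_def fun_eq_iff)
  then show ?case using zspan.zero by simp
next
  case (gen g) then show ?case using assms(2) by blast
next
  case (add x y)
  have "push f (\<lambda>p. x p + y p) = (\<lambda>p. push f x p + push f y p)" by (simp add: push_def fun_eq_iff)
  then show ?case using add zspan.add by metis
next
  case (neg x)
  have "push f (\<lambda>p. - x p) = (\<lambda>p. - push f x p)" by (simp add: push_def fun_eq_iff)
  then show ?case using neg zspan.neg by metis
qed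

lemma push_ind: "inj f \<Longrightarrow> push f (ind a) = ind (f a)"
  by (auto simp: push_def ind_def fun_eq_iff inj_eq)

lemma push_ind3: "inj f \<Longrightarrow> push f (\<lambda>q. ind a q - ind b q - ind c q) = (\<lambda>q. ind (f a) q - ind (f b) q - ind (f c) q)"
  by (auto simp: push_def ind_def fun_eq_iff inj_eq)
lemma push_ind2: "inj f \<Longrightarrow> push f (\<lambda>q. ind a q - ind b q) = (\<lambda>q. ind (f a) q - ind (f b) q)"
  by (auto simp: push_def ind_def fun_eq_iff inj_eq)

lemma cnt_img_inj: "inj f \<Longrightarrow> count (image_mset f A) (f a) = count A a"
  by (induction A) (auto simp: inj_eq)

lemma count_image_push: "inj f \<Longrightarrow>
   (\<lambda>q. int (count (image_mset f X) q) - int (count (image_mset f Y) q)) =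
   push f (\<lambda>q. int (count X q) - int (count Y q))"
proof (rule ext)
  fix q assume f: "inj f"
  show "int (count (image_mset f X) q) - int (count (image_mset f Y) q) =
     push f (\<lambda>q. int (count X q) - int (count Y q)) q"
  proof (cases "q \<in> range f")
    case True
    then obtain a where "q = f a" by blast
    then show ?thesis using f by (simp add: push_def cnt_img_inj)
  next
    case False
    then have "q \<notin># image_mset f X" "q \<notin># image_mset f Y" by auto
    then have "count (image_mset f X) q = 0" "count (image_mset f Y) q = 0"
      by (simp_all add: count_eq_zero_iff)
    then show ?thesis using False by (simp add: push_def)
  qed
qed

lemma lift_right:
  fixes SM :: "'m set"
  assumes "teq2 SA SM addM l r X Y" "z \<in> SM"
  shows "teq3 SA SM addM l r (image_mset (\<lambda>(x, y). (x, y, z)) X) (image_mset (\<lambda>(x, y). (x, y, z)) Y)"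
proof -
  let ?f = "\<lambda>(x, y). (x, y, z)"
  have inj: "inj ?f" by (auto simp: inj_def)
  have G: "push ?f g \<in> zspan (gens3 SA SM addM l r)" if "g \<in> gens2 SA SM addM l r" for g
  proof -
    from that have "push ?f g \<in> gens3 SA SM addM l r"
      unfolding gens2_def
    proof (elim UnE CollectE exE conjE)
      fix x x' y assume "g = (\<lambda>q. ind (addM x x', y) q - ind (x, y) q - ind (x', y) q)" "x \<in> SM" "x' \<in> SM" "y \<in> SM"
      then show ?thesis unfolding gens3_def using assms(2) by (simp add: push_ind3[OF inj]) blast
    next
      fix x y y' assume "g = (\<lambda>q. ind (x, addM y y') q - ind (x, y) q - ind (x, y') q)" "x \<in> SM" "y \<in> SM" "y' \<in> SM"
      then show ?thesis unfolding gens3_def using assms(2) by (simp add: push_ind3[OF inj]) blast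
    next
      fix x a y assume "g = (\<lambda>q. ind (r x a, y) q - ind (x, l a y) q)" "x \<in> SM" "a \<in> SA" "y \<in> SM"
      then show ?thesis unfolding gens3_def using assms(2) by (simp add: push_ind2[OF inj]) blast
    qed
    then show ?thesis by (rule zspan.gen)
  qed
  moreover have "set_mset (image_mset ?f X) \<subseteq> SM \<times> SM \<times> SM" "set_mset (image_mset ?f Y) \<subseteq> SM \<times> SM \<times> SM"
    using assms unfolding teq2_def by auto
  moreover have D: "(\<lambda>q. int (count X q) - int (count Y q)) \<in> zspan (gens2 SA SM addM l r)"
    using assms(1) unfolding teq2_def by blast
  moreover have "push ?f (\<lambda>q. int (count X q) - int (count Y q)) \<in> zspan (gens3 SA SM addM l r)"
    by (rule zspan_push[OF D]) (rule G)
  ultimately show ?thesis unfolding teq3_def by (simp add: count_image_push[OF inj])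
qed

lemma lift_left:
  fixes SM :: "'m set"
  assumes "teq2 SA SM addM l r X Y" "x \<in> SM"
  shows "teq3 SA SM addM l r (image_mset (\<lambda>(y, z). (x, y, z)) X) (image_mset (\<lambda>(y, z). (x, y, z)) Y)"
proof -
  define f :: "'m \<times> 'm \<Rightarrow> 'm \<times> 'm \<times> 'm" where "f = (\<lambda>(y, z). (x, y, z))"
  have inj: "inj f" by (auto simp: inj_def f_def)
  have fe: "f (u, v) = (x, u, v)" for u v by (simp add: f_def)
  have G: "push f g \<in> zspan (gens3 SA SM addM l r)" if "g \<in> gens2 SA SM addM l r" for g
  proof -
    from that have "push f g \<in> gens3 SA SM addM l r"
      unfolding gens2_def
    proof (elim UnE CollectE exE conjE)
      fix y y' z assume "g = (\<lambda>q. ind (addM y y', z) q - ind (y, z) q - ind (y', z) q)" "y \<in> SM" "y' \<in> SM" "z \<in> SM"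
      then show ?thesis unfolding gens3_def using assms(2) by (simp add: push_ind3[OF inj] fe) blast
    next
      fix y z z' assume "g = (\<lambda>q. ind (y, addM z z') q - ind (y, z) q - ind (y, z') q)" "y \<in> SM" "z \<in> SM" "z' \<in> SM"
      then show ?thesis unfolding gens3_def using assms(2) by (simp add: push_ind3[OF inj] fe) blast
    next
      fix y a z assume "g = (\<lambda>q. ind (r y a, z) q - ind (y, l a z) q)" "y \<in> SM" "a \<in> SA" "z \<in> SM"
      then show ?thesis unfolding gens3_def using assms(2) by (simp add: push_ind2[OF inj] fe) blast
    qed
    then show ?thesis by (rule zspan.gen)
  qed
  moreover have "set_mset (image_mset f X) \<subseteq> SM \<times> SM \<times> SM" "set_mset (image_mset f Y) \<subseteq> SM \<times> SM \<times> SM"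
    using assms unfolding teq2_def by (auto simp: f_def)
  moreover have D: "(\<lambda>q. int (count X q) - int (count Y q)) \<in> zspan (gens2 SA SM addM l r)"
    using assms(1) unfolding teq2_def by blast
  moreover have "push f (\<lambda>q. int (count X q) - int (count Y q)) \<in> zspan (gens3 SA SM addM l r)"
    by (rule zspan_push[OF D]) (rule G)
  ultimately show ?thesis unfolding teq3_def f_def[symmetric] by (simp add: count_image_push[OF inj])
qed


locale cov =
  fixes I :: "'i set" and J :: "'i \<Rightarrow> 'b::ring_1 set"
  assumes fin: "finite I" and idl: "\<And>i. i \<in> I \<Longrightarrow> two_sided_ideal (J i)"
begin

abbreviation mk :: "('i \<times> 'i \<Rightarrow> 'b) \<Rightarrow> ('i \<times> 'i \<Rightarrow> 'b set)" where
  "mk f \<equiv> (\<lambda>p\<in>I \<times> I. cos (JJ J p) (f p))"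
abbreviation mkA :: "('i \<Rightarrow> 'b) \<Rightarrow> ('i \<Rightarrow> 'b set)" where
  "mkA a \<equiv> (\<lambda>i\<in>I. cos (J i) (a i))"
abbreviation KK :: "'i \<Rightarrow> 'i \<Rightarrow> 'i \<Rightarrow> 'b set" where
  "KK i n m \<equiv> isum (isum (J i) (J n)) (J m)"
abbreviation te where
  "te X Y \<equiv> teq2 (Acar I J) (Ccar I J) (Cadd I J) (lact I J) (ract I J) X Y"

lemma JJ_pair: "JJ J (i, n) = isum (J i) (J n)"
  by (simp add: JJ_def)

lemma JJ_ideal: "p \<in> I \<times> I \<Longrightarrow> two_sided_ideal (JJ J p)"
  by (cases p) (auto simp: JJ_def intro: isum_ideal idl)

lemma KK_ideal: "i \<in> I \<Longrightarrow> n \<in> I \<Longrightarrow> m \<in> I \<Longrightarrow> two_sided_ideal (KK i n m)"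
  by (auto intro: isum_ideal idl)

lemma KK_sub:
  assumes "i \<in> I" "n \<in> I" "m \<in> I"
  shows "J i \<subseteq> KK i n m" "J n \<subseteq> KK i n m" "J m \<subseteq> KK i n m"
    "JJ J (i, n) \<subseteq> KK i n m" "JJ J (n, m) \<subseteq> KK i n m" "JJ J (i, m) \<subseteq> KK i n m"
proof -
  have z: "0 \<in> J t" if "t \<in> I" for t using idl[OF that] by (rule ideal_zero)
  have ii: "two_sided_ideal (J i)" "two_sided_ideal (J n)" "two_sided_ideal (J m)"
    using idl assms by auto
  show "J i \<subseteq> KK i n m"
    using isum_subL[OF ii(2), of "J i"] isum_subL[OF ii(3), of "isum (J i) (J n)"] by blast
  show "J n \<subseteq> KK i n m"
    using isum_subR[OF ii(1), of "J n"] isum_subL[OF ii(3), of "isum (J i) (J n)"] by blast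
  show "J m \<subseteq> KK i n m"
    using isum_subR[OF isum_ideal[OF ii(1,2)], of "J m"] by blast
  show "JJ J (i, n) \<subseteq> KK i n m"
    using isum_subL[OF idl[OF assms(3)]] by (simp add: JJ_def)
  show "JJ J (n, m) \<subseteq> KK i n m"
  proof
    fix x assume "x \<in> JJ J (n, m)"
    then obtain b c where "x = b + c" "b \<in> J n" "c \<in> J m" unfolding JJ_def isum_def by auto
    then have "x = (0 + b) + c" by simp
    then show "x \<in> KK i n m" unfolding isum_def using z assms \<open>b \<in> J n\<close> \<open>c \<in> J m\<close> by blast
  qed
  show "JJ J (i, m) \<subseteq> KK i n m"
  proof
    fix x assume "x \<in> JJ J (i, m)"
    then obtain b c where "x = b + c" "b \<in> J i" "c \<in> J m" unfolding JJ_def isum_def by auto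
    then have "x = (b + 0) + c" by simp
    then show "x \<in> KK i n m" unfolding isum_def using z assms \<open>b \<in> J i\<close> \<open>c \<in> J m\<close> by blast
  qed
qed

lemma J_sub_JJ: "i \<in> I \<Longrightarrow> n \<in> I \<Longrightarrow> J i \<subseteq> JJ J (i, n)" "i \<in> I \<Longrightarrow> n \<in> I \<Longrightarrow> J n \<subseteq> JJ J (i, n)"
  by (auto simp: JJ_def intro!: isum_subL isum_subR idl)

lemma JJ_diag: "i \<in> I \<Longrightarrow> JJ J (i, i) = J i"
  by (simp add: JJ_def isum_self idl)

lemma mk_in: "mk f \<in> Ccar I J"
  unfolding Ccar_def qcar_def by (simp add: restrict_PiE_iff)
lemma mkA_in: "mkA f \<in> Acar I J"
  unfolding Acar_def qcar_def by (simp add: restrict_PiE_iff)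

lemma M_mk: "x \<in> Ccar I J \<Longrightarrow> x = mk (\<lambda>p. rep (x p))"
proof (rule ext)
  fix p assume x: "x \<in> Ccar I J"
  show "x p = mk (\<lambda>p. rep (x p)) p"
  proof (cases "p \<in> I \<times> I")
    case True
    have "x p \<in> qcar (JJ J p)" using PiE_mem[OF x[unfolded Ccar_def] True] .
    then show ?thesis using True cos_rep[OF JJ_ideal[OF True]] by simp
  next
    case False then show ?thesis using PiE_arb[OF x[unfolded Ccar_def] False] by simp
  qed
qed

lemma A_mk: "x \<in> Acar I J \<Longrightarrow> x = mkA (\<lambda>i. rep (x i))"
proof (rule ext)
  fix p assume x: "x \<in> Acar I J"
  show "x p = mkA (\<lambda>p. rep (x p)) p"
  proof (cases "p \<in> I")
    case True
    have "x p \<in> qcar (J p)" using PiE_mem[OF x[unfolded Acar_def] True] .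
    then show ?thesis using True cos_rep[OF idl[OF True]] by simp
  next
    case False then show ?thesis using PiE_arb[OF x[unfolded Acar_def] False] by simp
  qed
qed

lemma mk_eq: "(\<And>p. p \<in> I \<times> I \<Longrightarrow> md (JJ J p) (f p) (g p)) \<Longrightarrow> mk f = mk g"
  by (rule restrict_ext) (metis cos_eq_iff JJ_ideal)
lemma mkA_eq: "(\<And>i. i \<in> I \<Longrightarrow> md (J i) (f i) (g i)) \<Longrightarrow> mkA f = mkA g"
  by (rule restrict_ext) (metis cos_eq_iff idl)

lemma rep_mk: "p \<in> I \<times> I \<Longrightarrow> md (JJ J p) (rep (mk f p)) (f p)"
  using rep_cos[OF JJ_ideal] by simp
lemma rep_mkA: "i \<in> I \<Longrightarrow> md (J i) (rep (mkA f i)) (f i)"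
  using rep_cos[OF idl] by simp

lemma Cadd_eq: "Cadd I J c c' = mk (\<lambda>p. rep (c p) + rep (c' p))"
  by (simp add: Cadd_def qadd_def)
lemma Cneg_eq: "Cneg I J c = mk (\<lambda>p. - rep (c p))"
  by (simp add: Cneg_def qneg_def)
lemma lact_eq: "lact I J a c = mk (\<lambda>p. rep (qlift (JJ J p) (a (fst p))) * rep (c p))"
  by (simp add: lact_def qmul_def)
lemma ract_eq: "ract I J c a = mk (\<lambda>p. rep (c p) * rep (qlift (JJ J p) (a (snd p))))"
  by (simp add: ract_def qmul_def)
lemma Aadd_eq: "Aadd I J a a' = mkA (\<lambda>i. rep (a i) + rep (a' i))"
  by (simp add: Aadd_def qadd_def)
lemma Amul_eq: "Amul I J a a' = mkA (\<lambda>i. rep (a i) * rep (a' i))"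
  by (simp add: Amul_def qmul_def)

lemma Cadd_mk: "Cadd I J (mk f) (mk g) = mk (\<lambda>p. f p + g p)"
  unfolding Cadd_eq
  by (rule mk_eq) (intro md_add rep_mk JJ_ideal; assumption)
lemma Cneg_mk: "Cneg I J (mk f) = mk (\<lambda>p. - f p)"
  unfolding Cneg_eq
  by (rule mk_eq) (intro md_neg rep_mk JJ_ideal; assumption)
lemma Czero_mk: "Czero I J = mk (\<lambda>p. 0)"
  by (simp add: Czero_def)
lemma Aadd_mk: "Aadd I J (mkA f) (mkA g) = mkA (\<lambda>i. f i + g i)"
  unfolding Aadd_eq
  by (rule mkA_eq) (intro md_add rep_mkA idl; assumption)
lemma Amul_mk: "Amul I J (mkA f) (mkA g) = mkA (\<lambda>i. f i * g i)"
  unfolding Amul_eq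
  by (rule mkA_eq) (intro md_mul rep_mkA idl; assumption)
lemma Aone_mk: "Aone I J = mkA (\<lambda>i. 1)"
  by (simp add: Aone_def)

lemma rep_qlift_mkA:
  assumes "p \<in> I \<times> I" "t = fst p \<or> t = snd p"
  shows "md (JJ J p) (rep (qlift (JJ J p) (mkA a t))) (a t)"
proof -
  obtain i n where p: "p = (i, n)" "i \<in> I" "n \<in> I" using assms by auto
  have t: "t \<in> I" using assms p by auto
  have sub: "J t \<subseteq> JJ J p" using assms(2) p J_sub_JJ[of i n] by auto
  have "md (JJ J p) (rep (qlift (JJ J p) (mkA a t))) (rep (mkA a t))"
    unfolding qlift_def by (rule rep_cos[OF JJ_ideal[OF assms(1)]])
  moreover have "md (JJ J p) (rep (mkA a t)) (a t)"
    using rep_mkA[OF t] sub by (rule md_mono)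
  ultimately show ?thesis using md_trans JJ_ideal[OF assms(1)] by blast
qed

lemma lact_mk: "lact I J (mkA a) (mk f) = mk (\<lambda>p. a (fst p) * f p)"
  unfolding lact_eq
proof (rule mk_eq)
  fix p assume p: "p \<in> I \<times> I"
  show "md (JJ J p) (rep (qlift (JJ J p) (mkA a (fst p))) * rep (mk f p)) (a (fst p) * f p)"
    by (rule md_mul[OF JJ_ideal[OF p] rep_qlift_mkA[OF p] rep_mk[OF p]]) simp
qed
lemma ract_mk: "ract I J (mk f) (mkA a) = mk (\<lambda>p. f p * a (snd p))"
  unfolding ract_eq
proof (rule mk_eq)
  fix p assume p: "p \<in> I \<times> I"
  show "md (JJ J p) (rep (mk f p) * rep (qlift (JJ J p) (mkA a (snd p)))) (f p * a (snd p))"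
    by (rule md_mul[OF JJ_ideal[OF p] rep_mk[OF p] rep_qlift_mkA[OF p]]) simp
qed

lemma Cadd_in: "Cadd I J x y \<in> Ccar I J"
  unfolding Cadd_eq by (rule mk_in)
lemma lact_in: "lact I J a x \<in> Ccar I J"
  unfolding lact_eq by (rule mk_in)
lemma ract_in: "ract I J x a \<in> Ccar I J"
  unfolding ract_eq by (rule mk_in)

end


context cov begin

lemma te_refl: "set_mset X \<subseteq> Ccar I J \<times> Ccar I J \<Longrightarrow> te X X"
  unfolding teq2_G by (rule teqG_refl)
lemma te_sym: "te X Y \<Longrightarrow> te Y X"
  unfolding teq2_G by (rule teqG_sym)
lemma te_trans: "te X Y \<Longrightarrow> te Y Z \<Longrightarrow> te X Z"
  unfolding teq2_G by (rule teqG_trans)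
lemma te_add: "te X Y \<Longrightarrow> te X' Y' \<Longrightarrow> te (X + X') (Y + Y')"
  unfolding teq2_G by (rule teqG_add)
lemma te_cancel: "te (X + Z) (Y + Z) \<Longrightarrow> te X Y"
  unfolding teq2_G by (rule teqG_cancel)
lemma te_sum: "(\<And>t. t \<in> T \<Longrightarrow> te (F t) (H t)) \<Longrightarrow> te (sum F T) (sum H T)"
  unfolding teq2_G by (rule teqG_sum)
lemma te_empty: "te {#} {#}"
  by (rule te_refl) simp

lemma te_g1: "x \<in> Ccar I J \<Longrightarrow> x' \<in> Ccar I J \<Longrightarrow> y \<in> Ccar I J \<Longrightarrow>
   te {#(Cadd I J x x', y)#} ({#(x, y)#} + {#(x', y)#})"
  using gen1[of x "Ccar I J" x' y "Cadd I J" "Acar I J" "lact I J" "ract I J"] Cadd_in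
  by (simp add: add_mset_commute)
lemma te_g2: "x \<in> Ccar I J \<Longrightarrow> y \<in> Ccar I J \<Longrightarrow> y' \<in> Ccar I J \<Longrightarrow>
   te {#(x, Cadd I J y y')#} ({#(x, y)#} + {#(x, y')#})"
  using gen2[of x "Ccar I J" y y' "Cadd I J" "Acar I J" "lact I J" "ract I J"] Cadd_in
  by (simp add: add_mset_commute)
lemma te_g3: "x \<in> Ccar I J \<Longrightarrow> a \<in> Acar I J \<Longrightarrow> y \<in> Ccar I J \<Longrightarrow>
   te {#(ract I J x a, y)#} {#(x, lact I J a y)#}"
  using gen3[of x "Ccar I J" a "Acar I J" y "ract I J" "lact I J" "Cadd I J"] lact_in ract_in
  by simp

lemma zeroL: "y \<in> Ccar I J \<Longrightarrow> te {#(mk (\<lambda>_. 0), y)#} {#}"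
proof -
  assume y: "y \<in> Ccar I J"
  have "Cadd I J (mk (\<lambda>_. 0)) (mk (\<lambda>_. 0)) = mk (\<lambda>_. 0)" by (simp add: Cadd_mk)
  then have "te {#(mk (\<lambda>_. 0), y)#} ({#(mk (\<lambda>_. 0), y)#} + {#(mk (\<lambda>_. 0), y)#})"
    using te_g1[OF mk_in mk_in y, of "\<lambda>_. 0" "\<lambda>_. 0"] by simp
  then have "te ({#} + {#(mk (\<lambda>_. 0), y)#}) ({#(mk (\<lambda>_. 0), y)#} + {#(mk (\<lambda>_. 0), y)#})" by simp
  then have "te {#} {#(mk (\<lambda>_. 0), y)#}" by (rule te_cancel)
  then show ?thesis by (rule te_sym)
qed

lemma zeroR: "x \<in> Ccar I J \<Longrightarrow> te {#(x, mk (\<lambda>_. 0))#} {#}"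
proof -
  assume x: "x \<in> Ccar I J"
  have "Cadd I J (mk (\<lambda>_. 0)) (mk (\<lambda>_. 0)) = mk (\<lambda>_. 0)" by (simp add: Cadd_mk)
  then have "te {#(x, mk (\<lambda>_. 0))#} ({#(x, mk (\<lambda>_. 0))#} + {#(x, mk (\<lambda>_. 0))#})"
    using te_g2[OF x mk_in mk_in, of "\<lambda>_. 0" "\<lambda>_. 0"] by simp
  then have "te ({#} + {#(x, mk (\<lambda>_. 0))#}) ({#(x, mk (\<lambda>_. 0))#} + {#(x, mk (\<lambda>_. 0))#})" by simp
  then have "te {#} {#(x, mk (\<lambda>_. 0))#}" by (rule te_cancel)
  then show ?thesis by (rule te_sym)
qed

definition E :: "'i \<Rightarrow> 'i \<Rightarrow> 'b \<Rightarrow> ('i \<times> 'i \<Rightarrow> 'b set)" where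
  "E i n z = mk (\<lambda>p. if p = (i, n) then z else 0)"

lemma E_in: "E i n z \<in> Ccar I J"
  unfolding E_def by (rule mk_in)

lemma E_zero: "E i n 0 = mk (\<lambda>_. 0)"
  unfolding E_def by simp

lemma E_add: "E i n (u + v) = Cadd I J (E i n u) (E i n v)"
  unfolding E_def Cadd_mk by (rule arg_cong[where f = mk]) auto

lemma KEY:
  assumes i: "i \<in> I" and n: "n \<in> I" and m: "m \<in> I" and zz: "md (KK i n m) z z'"
  shows "te {#(E i n 1, E n m z)#} {#(E i n 1, E n m z')#}"
proof -
  have ii: "two_sided_ideal (J i)" "two_sided_ideal (J n)" "two_sided_ideal (J m)"
    using idl i n m by auto
  from zz obtain a b c where abc: "z - z' = (a + b) + c" "a \<in> J i" "b \<in> J n" "c \<in> J m"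
    unfolding md_def isum_def by blast
  have "E n m z = E n m (z' + a)"
    unfolding E_def
  proof (rule mk_eq)
    fix p assume p: "p \<in> I \<times> I"
    show "md (JJ J p) (if p = (n, m) then z else 0) (if p = (n, m) then z' + a else 0)"
    proof (cases "p = (n, m)")
      case True
      have "z - (z' + a) = b + c" using abc(1) by (simp add: algebra_simps)
      then have "z - (z' + a) \<in> JJ J (n, m)" unfolding JJ_def isum_def using abc by auto
      then show ?thesis using True by (simp add: md_def)
    next
      case False then show ?thesis by (simp add: md_refl JJ_ideal p)
    qed
  qed
  also have "\<dots> = Cadd I J (E n m z') (E n m a)" by (rule E_add)
  finally have 1: "te {#(E i n 1, E n m z)#} ({#(E i n 1, E n m z')#} + {#(E i n 1, E n m a)#})"
    using te_g2[OF E_in E_in E_in] by simp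
  define \<alpha> where "\<alpha> = mkA (\<lambda>t. if t = n then a else 0)"
  have al: "\<alpha> \<in> Acar I J" unfolding \<alpha>_def by (rule mkA_in)
  have "lact I J \<alpha> (E n m 1) = E n m a"
    unfolding \<alpha>_def E_def lact_mk by (rule arg_cong[where f = mk]) auto
  moreover have "ract I J (E i n 1) \<alpha> = mk (\<lambda>_. 0)"
    unfolding \<alpha>_def E_def ract_mk
  proof (rule mk_eq)
    fix p assume p: "p \<in> I \<times> I"
    have "a \<in> JJ J (i, n)" using J_sub_JJ(1)[OF i n] abc by auto
    then show "md (JJ J p) ((if p = (i, n) then 1 else 0) * (if snd p = n then a else 0)) 0"
      using ideal_zero[OF JJ_ideal[OF p]] by (cases "p = (i, n)") (auto simp: md_def)
  qed
  ultimately have "te {#(mk (\<lambda>_. 0), E n m 1)#} {#(E i n 1, E n m a)#}"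
    using te_g3[OF E_in al E_in, of i n 1 n m 1] by simp
  then have 2: "te {#(E i n 1, E n m a)#} {#}"
    using zeroL[OF E_in] te_sym te_trans by blast
  have "te ({#(E i n 1, E n m z')#} + {#(E i n 1, E n m a)#}) ({#(E i n 1, E n m z')#} + {#})"
    by (rule te_add[OF te_refl 2]) (simp add: E_in)
  then show ?thesis using 1 te_trans by simp
qed

lemma BAL:
  assumes "i \<in> I" "n \<in> I" "n' \<in> I" "m \<in> I"
  shows "te {#(E i n a, E n' m b)#} {#(E i n 1, E n' m (if n' = n then a * b else 0))#}"
proof -
  define \<alpha> where "\<alpha> = mkA (\<lambda>t. if t = n then a else 0)"
  have al: "\<alpha> \<in> Acar I J" unfolding \<alpha>_def by (rule mkA_in)
  have "ract I J (E i n 1) \<alpha> = E i n a"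
    unfolding \<alpha>_def E_def ract_mk by (rule arg_cong[where f = mk]) auto
  moreover have "lact I J \<alpha> (E n' m b) = E n' m (if n' = n then a * b else 0)"
    unfolding \<alpha>_def E_def lact_mk by (rule arg_cong[where f = mk]) auto
  ultimately show ?thesis using te_g3[OF E_in al E_in, of i n 1 n' m b] by simp
qed

lemma SUML:
  assumes "finite T" "y \<in> Ccar I J"
  shows "te {#(mk (\<lambda>p. \<Sum>t\<in>T. f t p), y)#} (\<Sum>t\<in>T. {#(mk (f t), y)#})"
  using assms(1)
proof (induction T rule: finite_induct)
  case empty
  show ?case unfolding sum.empty by (rule zeroL[OF assms(2)])
next
  case (insert t T)
  have "mk (\<lambda>p. \<Sum>t\<in>insert t T. f t p) = mk (\<lambda>p. f t p + (\<Sum>t\<in>T. f t p))"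
    by (rule restrict_ext) (simp only: sum.insert[OF insert.hyps])
  then have "mk (\<lambda>p. \<Sum>t\<in>insert t T. f t p) = Cadd I J (mk (f t)) (mk (\<lambda>p. \<Sum>t\<in>T. f t p))"
    by (simp only: Cadd_mk)
  then have A: "te {#(mk (\<lambda>p. \<Sum>t\<in>insert t T. f t p), y)#}
      ({#(mk (f t), y)#} + {#(mk (\<lambda>p. \<Sum>t\<in>T. f t p), y)#})"
    using te_g1[OF mk_in mk_in assms(2), of "f t" "\<lambda>p. \<Sum>t\<in>T. f t p"] by (simp only:)
  have B: "te ({#(mk (f t), y)#} + {#(mk (\<lambda>p. \<Sum>t\<in>T. f t p), y)#})
     ({#(mk (f t), y)#} + (\<Sum>t\<in>T. {#(mk (f t), y)#}))"
    by (rule te_add[OF te_refl insert.IH]) (simp add: mk_in assms(2))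
  have C: "(\<Sum>t\<in>insert t T. {#(mk (f t), y)#}) = {#(mk (f t), y)#} + (\<Sum>t\<in>T. {#(mk (f t), y)#})"
    by (simp only: sum.insert[OF insert.hyps])
  show ?case unfolding C by (rule te_trans[OF A B])
qed

lemma SUMR:
  assumes "finite T" "x \<in> Ccar I J"
  shows "te {#(x, mk (\<lambda>p. \<Sum>t\<in>T. f t p))#} (\<Sum>t\<in>T. {#(x, mk (f t))#})"
  using assms(1)
proof (induction T rule: finite_induct)
  case empty
  show ?case unfolding sum.empty by (rule zeroR[OF assms(2)])
next
  case (insert t T)
  have "mk (\<lambda>p. \<Sum>t\<in>insert t T. f t p) = mk (\<lambda>p. f t p + (\<Sum>t\<in>T. f t p))"
    by (rule restrict_ext) (simp only: sum.insert[OF insert.hyps])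
  then have "mk (\<lambda>p. \<Sum>t\<in>insert t T. f t p) = Cadd I J (mk (f t)) (mk (\<lambda>p. \<Sum>t\<in>T. f t p))"
    by (simp only: Cadd_mk)
  then have A: "te {#(x, mk (\<lambda>p. \<Sum>t\<in>insert t T. f t p))#}
      ({#(x, mk (f t))#} + {#(x, mk (\<lambda>p. \<Sum>t\<in>T. f t p))#})"
    using te_g2[OF assms(2) mk_in mk_in, of "f t" "\<lambda>p. \<Sum>t\<in>T. f t p"] by (simp only:)
  have B: "te ({#(x, mk (f t))#} + {#(x, mk (\<lambda>p. \<Sum>t\<in>T. f t p))#})
     ({#(x, mk (f t))#} + (\<Sum>t\<in>T. {#(x, mk (f t))#}))"
    by (rule te_add[OF te_refl insert.IH]) (simp add: mk_in assms(2))
  have C: "(\<Sum>t\<in>insert t T. {#(x, mk (f t))#}) = {#(x, mk (f t))#} + (\<Sum>t\<in>T. {#(x, mk (f t))#})"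
    by (simp only: sum.insert[OF insert.hyps])
  show ?case unfolding C by (rule te_trans[OF A B])
qed

end


context cov begin

definition phi :: "(('i \<times> 'i \<Rightarrow> 'b set) \<times> ('i \<times> 'i \<Rightarrow> 'b set)) multiset \<Rightarrow> 'i \<Rightarrow> 'i \<Rightarrow> 'i \<Rightarrow> 'b" where
  "phi X i n m = sum_mset (image_mset (\<lambda>(x, y). rep (x (i, n)) * rep (y (n, m))) X)"

definition NF where
  "NF X = (\<Sum>t\<in>I \<times> I. \<Sum>m\<in>I. {#(E (fst t) (snd t) 1, E (snd t) m (phi X (fst t) (snd t) m))#})"

lemma phi_empty: "phi {#} i n m = 0" by (simp add: phi_def)
lemma phi_add: "phi (X + Y) i n m = phi X i n m + phi Y i n m" by (simp add: phi_def)
lemma phi_single: "phi {#(x, y)#} i n m = rep (x (i, n)) * rep (y (n, m))" by (simp add: phi_def)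

lemma NF_empty: "te (NF {#}) {#}"
proof -
  have "te (NF {#}) (\<Sum>t\<in>I \<times> I. \<Sum>m\<in>I. {#})"
    unfolding NF_def phi_empty E_zero
    by (rule te_sum, rule te_sum, rule zeroR[OF E_in])
  then show ?thesis by simp
qed

lemma NF_add: "te (NF (X + Y)) (NF X + NF Y)"
proof -
  have "te (NF (X + Y)) (\<Sum>t\<in>I \<times> I. \<Sum>m\<in>I. {#(E (fst t) (snd t) 1, E (snd t) m (phi X (fst t) (snd t) m))#}
      + {#(E (fst t) (snd t) 1, E (snd t) m (phi Y (fst t) (snd t) m))#})"
    unfolding NF_def phi_add E_add
    by (rule te_sum, rule te_sum, rule te_g2[OF E_in E_in E_in])
  moreover have "NF X + NF Y = (\<Sum>t\<in>I \<times> I. \<Sum>m\<in>I. {#(E (fst t) (snd t) 1, E (snd t) m (phi X (fst t) (snd t) m))#}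
      + {#(E (fst t) (snd t) 1, E (snd t) m (phi Y (fst t) (snd t) m))#})"
    unfolding NF_def by (simp only: sum.distrib)
  ultimately show ?thesis by simp
qed

lemma NF_single:
  assumes x: "x \<in> Ccar I J" and y: "y \<in> Ccar I J"
  shows "te {#(x, y)#} (NF {#(x, y)#})"
proof -
  define rx where "rx = (\<lambda>p. rep (x p))"
  define ry where "ry = (\<lambda>p. rep (y p))"
  define fx where "fx = (\<lambda>t p. if p = t then rx t else (0::'b))"
  define gy where "gy = (\<lambda>t p. if p = t then ry t else (0::'b))"
  have finII: "finite (I \<times> I)" using fin by simp
  have xe: "x = mk (\<lambda>p. \<Sum>t\<in>I \<times> I. fx t p)"
  proof -
    have "x = mk rx" unfolding rx_def by (rule M_mk[OF x])
    also have "\<dots> = mk (\<lambda>p. \<Sum>t\<in>I \<times> I. fx t p)"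
      by (rule restrict_ext) (simp add: fx_def finII)
    finally show ?thesis .
  qed
  have ye: "y = mk (\<lambda>p. \<Sum>t\<in>I \<times> I. gy t p)"
  proof -
    have "y = mk ry" unfolding ry_def by (rule M_mk[OF y])
    also have "\<dots> = mk (\<lambda>p. \<Sum>t\<in>I \<times> I. gy t p)"
      by (rule restrict_ext) (simp add: gy_def finII)
    finally show ?thesis .
  qed
  have s1: "te {#(x, y)#} (\<Sum>t\<in>I \<times> I. {#(mk (fx t), y)#})"
    using SUML[OF finII y, where f = fx] xe by simp
  have s2: "te {#(mk (fx t), y)#} (\<Sum>m\<in>I. {#(E (fst t) (snd t) 1, E (snd t) m (rx t * ry (snd t, m)))#})"
    if t: "t \<in> I \<times> I" for t
  proof -
    obtain i n where tt: "t = (i, n)" "i \<in> I" "n \<in> I" using t by auto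
    have fxE: "mk (fx t) = E i n (rx t)" unfolding fx_def E_def tt by simp
    have gyE: "mk (gy s) = E (fst s) (snd s) (ry s)" for s
      unfolding gy_def E_def by (cases s) simp
    have a: "te {#(mk (fx t), y)#} (\<Sum>s\<in>I \<times> I. {#(mk (fx t), mk (gy s))#})"
      using SUMR[OF finII mk_in[of "fx t"], where f = gy] ye by simp
    have b: "te {#(mk (fx t), mk (gy s))#}
        (if fst s = n then {#(E i n 1, E n (snd s) (rx t * ry s))#} else {#})"
      if s: "s \<in> I \<times> I" for s
    proof -
      have "te {#(mk (fx t), mk (gy s))#} {#(E i n 1, E (fst s) (snd s) (if fst s = n then rx t * ry s else 0))#}"
        unfolding fxE gyE using BAL[of i n "fst s" "snd s" "rx t" "ry s"] tt s by auto
      moreover have "te {#(E i n 1, E (fst s) (snd s) (if fst s = n then rx t * ry s else 0))#}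
          (if fst s = n then {#(E i n 1, E n (snd s) (rx t * ry s))#} else {#})"
      proof (cases "fst s = n")
        case True then show ?thesis by (simp add: te_refl E_in)
      next
        case False then show ?thesis by (simp add: E_zero zeroR E_in)
      qed
      ultimately show ?thesis by (rule te_trans)
    qed
    have c: "(\<Sum>s\<in>I \<times> I. (if fst s = n then {#(E i n 1, E n (snd s) (rx t * ry s))#} else {#}))
        = (\<Sum>m\<in>I. {#(E i n 1, E n m (rx t * ry (n, m)))#})"
    proof -
      have "(\<Sum>s\<in>I \<times> I. (if fst s = n then {#(E i n 1, E n (snd s) (rx t * ry s))#} else {#}))
          = (\<Sum>n'\<in>I. \<Sum>m\<in>I. (if n' = n then {#(E i n 1, E n m (rx t * ry (n', m)))#} else {#}))"
        by (simp add: sum.cartesian_product case_prod_unfold)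
           (rule sum.cong, auto)
      also have "\<dots> = (\<Sum>n'\<in>I. (if n' = n then (\<Sum>m\<in>I. {#(E i n 1, E n m (rx t * ry (n, m)))#}) else {#}))"
        by (rule sum.cong) auto
      also have "\<dots> = (\<Sum>m\<in>I. {#(E i n 1, E n m (rx t * ry (n, m)))#})"
        using tt fin by (simp add: sum.delta)
      finally show ?thesis .
    qed
    have "te {#(mk (fx t), y)#} (\<Sum>s\<in>I \<times> I. (if fst s = n then {#(E i n 1, E n (snd s) (rx t * ry s))#} else {#}))"
      by (rule te_trans[OF a te_sum]) (rule b)
    then show ?thesis unfolding c using tt by simp
  qed
  have "te {#(x, y)#} (\<Sum>t\<in>I \<times> I. \<Sum>m\<in>I. {#(E (fst t) (snd t) 1, E (snd t) m (rx t * ry (snd t, m)))#})"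
    by (rule te_trans[OF s1 te_sum]) (rule s2)
  then show ?thesis unfolding NF_def phi_single rx_def ry_def by simp
qed

lemma NF_conv: "set_mset X \<subseteq> Ccar I J \<times> Ccar I J \<Longrightarrow> te X (NF X)"
proof (induction X)
  case empty
  then show ?case using te_sym[OF NF_empty] by simp
next
  case (add a X)
  obtain x y where a: "a = (x, y)" "x \<in> Ccar I J" "y \<in> Ccar I J" using add.prems by (cases a) auto
  have e: "add_mset a X = X + {#a#}" by simp
  have sX: "set_mset X \<subseteq> Ccar I J \<times> Ccar I J" using add.prems by auto
  have "te (X + {#a#}) (NF X + NF {#a#})"
    unfolding a(1) by (rule te_add[OF add.IH[OF sX] NF_single[OF a(2,3)]])
  moreover have "te (NF X + NF {#a#}) (NF (X + {#a#}))" by (rule te_sym[OF NF_add])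
  ultimately have "te (X + {#a#}) (NF (X + {#a#}))" by (rule te_trans)
  then show ?case by (simp only: e)
qed

lemma NF_cong:
  assumes "\<And>i n m. i \<in> I \<Longrightarrow> n \<in> I \<Longrightarrow> m \<in> I \<Longrightarrow> md (KK i n m) (phi X i n m) (phi Y i n m)"
  shows "te (NF X) (NF Y)"
  unfolding NF_def
  by (rule te_sum, rule te_sum, rule KEY) (auto intro: assms)

lemma ML2:
  assumes "set_mset X \<subseteq> Ccar I J \<times> Ccar I J" "set_mset Y \<subseteq> Ccar I J \<times> Ccar I J"
    and "\<And>i n m. i \<in> I \<Longrightarrow> n \<in> I \<Longrightarrow> m \<in> I \<Longrightarrow> md (KK i n m) (phi X i n m) (phi Y i n m)"
  shows "te X Y"
  using NF_conv[OF assms(1)] NF_cong[OF assms(3)] te_sym[OF NF_conv[OF assms(2)]] te_trans by blast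

end


context cov begin

lemma allM: "(\<And>f. P (mk f)) \<Longrightarrow> \<forall>x\<in>Ccar I J. P x"
  using M_mk by metis
lemma allA: "(\<And>f. P (mkA f)) \<Longrightarrow> \<forall>a\<in>Acar I J. P a"
  using A_mk by metis

lemma bimod: "bimodule (Acar I J) (Aadd I J) (Amul I J) (Aone I J)
           (Ccar I J) (Cadd I J) (Czero I J) (Cneg I J) (lact I J) (ract I J)"
  unfolding bimodule_def
proof (intro conjI)
  show "Czero I J \<in> Ccar I J" by (simp add: Czero_mk mk_in)
  show "\<forall>x\<in>Ccar I J. \<forall>y\<in>Ccar I J. Cadd I J x y \<in> Ccar I J" by (simp add: Cadd_in)
  show "\<forall>x\<in>Ccar I J. Cneg I J x \<in> Ccar I J" by (simp add: Cneg_eq mk_in)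
  show "\<forall>x\<in>Ccar I J. \<forall>y\<in>Ccar I J. \<forall>z\<in>Ccar I J. Cadd I J (Cadd I J x y) z = Cadd I J x (Cadd I J y z)"
    by (intro allM) (simp add: Cadd_mk add.assoc)
  show "\<forall>x\<in>Ccar I J. \<forall>y\<in>Ccar I J. Cadd I J x y = Cadd I J y x"
    by (intro allM) (simp add: Cadd_mk add.commute)
  show "\<forall>x\<in>Ccar I J. Cadd I J (Czero I J) x = x"
    by (intro allM) (simp add: Cadd_mk Czero_mk)
  show "\<forall>x\<in>Ccar I J. Cadd I J (Cneg I J x) x = Czero I J"
    by (intro allM) (simp add: Cadd_mk Czero_mk Cneg_mk)
  show "\<forall>a\<in>Acar I J. \<forall>x\<in>Ccar I J. lact I J a x \<in> Ccar I J \<and> ract I J x a \<in> Ccar I J"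
    by (simp add: lact_in ract_in)
  show "\<forall>a\<in>Acar I J. \<forall>b\<in>Acar I J. \<forall>x\<in>Ccar I J.
      lact I J (Amul I J a b) x = lact I J a (lact I J b x) \<and> ract I J x (Amul I J a b) = ract I J (ract I J x a) b"
    by (intro allM allA) (simp add: Amul_mk lact_mk ract_mk mult.assoc)
  show "\<forall>x\<in>Ccar I J. lact I J (Aone I J) x = x \<and> ract I J x (Aone I J) = x"
    by (intro allM) (simp add: Aone_mk lact_mk ract_mk)
  show "\<forall>a\<in>Acar I J. \<forall>x\<in>Ccar I J. \<forall>y\<in>Ccar I J.
      lact I J a (Cadd I J x y) = Cadd I J (lact I J a x) (lact I J a y) \<and>
      ract I J (Cadd I J x y) a = Cadd I J (ract I J x a) (ract I J y a)"
    by (intro allM allA) (simp add: Cadd_mk lact_mk ract_mk ring_distribs)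
  show "\<forall>a\<in>Acar I J. \<forall>b\<in>Acar I J. \<forall>x\<in>Ccar I J.
      lact I J (Aadd I J a b) x = Cadd I J (lact I J a x) (lact I J b x) \<and>
      ract I J x (Aadd I J a b) = Cadd I J (ract I J x a) (ract I J x b)"
    by (intro allM allA) (simp add: Cadd_mk Aadd_mk lact_mk ract_mk ring_distribs)
  show "\<forall>a\<in>Acar I J. \<forall>b\<in>Acar I J. \<forall>x\<in>Ccar I J. ract I J (lact I J a x) b = lact I J a (ract I J x b)"
    by (intro allM allA) (simp add: lact_mk ract_mk mult.assoc)
qed

lemma central:
  assumes "k_algebra sc"
  shows "\<forall>c. \<forall>x\<in>Ccar I J. lact I J (kA sc I J c) x = ract I J x (kA sc I J c)"
proof (intro allI allM)
  fix c f
  have com: "sc c 1 * y = y * sc c 1" for y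
  proof -
    have "sc c (1 * y) = sc c 1 * y" "sc c (y * 1) = y * sc c 1"
      using assms unfolding k_algebra_def by blast+
    then show ?thesis by simp
  qed
  have "kA sc I J c = mkA (\<lambda>_. sc c 1)" by (simp add: kA_def)
  then show "lact I J (kA sc I J c) (mk f) = ract I J (mk f) (kA sc I J c)"
    by (simp add: lact_mk ract_mk com)
qed

lemma phi_image:
  "phi (image_mset (\<lambda>k. (F k, G k)) (mset_set I)) i n m = (\<Sum>k\<in>I. rep (F k (i, n)) * rep (G k (n, m)))"
  unfolding phi_def by (simp add: sum_unfold_sum_mset image_mset.compositionality comp_def)

lemma PHI_mk:
  assumes "i \<in> I" "n \<in> I" "m \<in> I"
  shows "md (KK i n m) (phi (image_mset (\<lambda>k. (mk (F k), mk (G k))) (mset_set I)) i n m)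
      (\<Sum>k\<in>I. F k (i, n) * G k (n, m))"
  unfolding phi_image
  by (intro md_sum md_mul KK_ideal assms md_mono[OF rep_mk] KK_sub) (use assms in auto)

lemma DeltaF_img: "DeltaF I J b = image_mset (\<lambda>k. (mk (\<lambda>p. b (fst p, k)), mk (\<lambda>p. if k = snd p then 1 else 0))) (mset_set I)"
  by (simp add: DeltaF_def)
lemma DeltaF'_img: "DeltaF' I J b = image_mset (\<lambda>k. (mk (\<lambda>p. if fst p = k then 1 else 0), mk (\<lambda>p. b (k, snd p)))) (mset_set I)"
  by (simp add: DeltaF'_def)

lemma DeltaF_set: "set_mset (DeltaF I J b) \<subseteq> Ccar I J \<times> Ccar I J"
  unfolding DeltaF_img by (auto simp: mk_in)
lemma DeltaF'_set: "set_mset (DeltaF' I J b) \<subseteq> Ccar I J \<times> Ccar I J"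
  unfolding DeltaF'_img by (auto simp: mk_in)

lemma DELTA_phi:
  assumes "i \<in> I" "n \<in> I" "m \<in> I"
  shows "md (KK i n m) (phi (DeltaF I J b) i n m) (b (i, m))"
proof -
  have "md (KK i n m) (phi (DeltaF I J b) i n m) (\<Sum>k\<in>I. b (i, k) * (if k = m then 1 else 0))"
    unfolding DeltaF_img using PHI_mk[OF assms, where F = "\<lambda>k p. b (fst p, k)" and G = "\<lambda>k p. if k = snd p then 1 else 0"] by simp
  moreover have "(\<Sum>k\<in>I. b (i, k) * (if k = m then 1 else 0)) = b (i, m)"
    using assms fin by (simp add: if_distrib[of "\<lambda>x. b _ * x"] cong: if_cong)
  ultimately show ?thesis by simp
qed

lemma DELTA'_phi:
  assumes "i \<in> I" "n \<in> I" "m \<in> I"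
  shows "md (KK i n m) (phi (DeltaF' I J b) i n m) (b (i, m))"
proof -
  have "md (KK i n m) (phi (DeltaF' I J b) i n m) (\<Sum>k\<in>I. (if i = k then 1 else 0) * b (k, m))"
    unfolding DeltaF'_img using PHI_mk[OF assms, where F = "\<lambda>k p. if fst p = k then 1 else 0" and G = "\<lambda>k p. b (k, snd p)"] by simp
  moreover have "(\<Sum>k\<in>I. (if i = k then 1 else 0) * b (k, m)) = (\<Sum>k\<in>I. if i = k then b (k, m) else 0)"
    by (rule sum.cong) auto
  moreover have "(\<Sum>k\<in>I. if i = k then b (k, m) else 0) = b (i, m)"
    using assms fin by simp
  ultimately show ?thesis by simp
qed

end


declare restrict_apply[simp del]

context cov begin

lemma md3: "two_sided_ideal K \<Longrightarrow> md K a x \<Longrightarrow> md K x y \<Longrightarrow> md K b y \<Longrightarrow> md K a b"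
  by (meson md_sym md_trans)

lemma rep_mk_diag: "i \<in> I \<Longrightarrow> md (J i) (rep (mk f (i, i))) (f (i, i))"
  using rep_mk[of "(i, i)" f] JJ_diag by simp

lemma rep_mk_K: "i \<in> I \<Longrightarrow> n \<in> I \<Longrightarrow> m \<in> I \<Longrightarrow> md (KK i n m) (rep (mk f (i, m))) (f (i, m))"
  using md_mono[OF rep_mk KK_sub(6)] by simp

lemma DELTAC:
  assumes "i \<in> I" "n \<in> I" "m \<in> I"
  shows "md (KK i n m) (phi (DeltaC I J c) i n m) (rep (c (i, m)))"
  unfolding DeltaC_def using DELTA_phi[OF assms] .

lemma DELTAC_mk:
  assumes "i \<in> I" "n \<in> I" "m \<in> I"
  shows "md (KK i n m) (phi (DeltaC I J (mk f)) i n m) (f (i, m))"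
  using md_trans[OF KK_ideal[OF assms] DELTAC[OF assms, of "mk f"] rep_mk_K[OF assms, of f]] .

lemma welldef:
  assumes "\<forall>i\<in>I. \<forall>j\<in>I. cos (JJ J (i, j)) (b (i, j)) = cos (JJ J (i, j)) (b' (i, j))"
  shows "te (DeltaF I J b) (DeltaF I J b') \<and> epsF I J b = epsF I J b'"
proof
  show "te (DeltaF I J b) (DeltaF I J b')"
  proof (rule ML2[OF DeltaF_set DeltaF_set])
    fix i n m assume inm: "i \<in> I" "n \<in> I" "m \<in> I"
    have "cos (JJ J (i, m)) (b (i, m)) = cos (JJ J (i, m)) (b' (i, m))" using assms inm by blast
    then have "md (JJ J (i, m)) (b (i, m)) (b' (i, m))"
      using cos_eq_iff[OF JJ_ideal[of "(i, m)"]] inm by simp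
    then have "md (KK i n m) (b (i, m)) (b' (i, m))" using KK_sub(6)[OF inm] by (rule md_mono)
    then show "md (KK i n m) (phi (DeltaF I J b) i n m) (phi (DeltaF I J b') i n m)"
      using md3[OF KK_ideal[OF inm] DELTA_phi[OF inm] _ DELTA_phi[OF inm]] by blast
  qed
  show "epsF I J b = epsF I J b'"
    unfolding epsF_def
  proof (rule restrict_ext)
    fix i assume i: "i \<in> I"
    have "cos (JJ J (i, i)) (b (i, i)) = cos (JJ J (i, i)) (b' (i, i))" using assms i by blast
    then show "cos (J i) (b (i, i)) = cos (J i) (b' (i, i))" using JJ_diag[OF i] by simp
  qed
qed

lemma DeltaF_F': "te (DeltaF I J b) (DeltaF' I J b)"
proof (rule ML2[OF DeltaF_set DeltaF'_set])
  fix i n m assume inm: "i \<in> I" "n \<in> I" "m \<in> I"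
  show "md (KK i n m) (phi (DeltaF I J b) i n m) (phi (DeltaF' I J b) i n m)"
    using md3[OF KK_ideal[OF inm] DELTA_phi[OF inm] md_refl[OF KK_ideal[OF inm]] DELTA'_phi[OF inm]] .
qed

lemma epsC_eq: "epsC I J c = mkA (\<lambda>i. rep (c (i, i)))"
  by (simp add: epsC_def epsF_def)

lemma DeltaC_set: "set_mset (DeltaC I J c) \<subseteq> Ccar I J \<times> Ccar I J"
  unfolding DeltaC_def by (rule DeltaF_set)

lemma Delta_add:
  assumes c: "c \<in> Ccar I J" and c': "c' \<in> Ccar I J"
  shows "te (DeltaC I J (Cadd I J c c')) (DeltaC I J c + DeltaC I J c')"
proof (rule ML2)
  show "set_mset (DeltaC I J (Cadd I J c c')) \<subseteq> Ccar I J \<times> Ccar I J" by (rule DeltaC_set)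
  show "set_mset (DeltaC I J c + DeltaC I J c') \<subseteq> Ccar I J \<times> Ccar I J" using DeltaC_set by auto
  fix i n m assume inm: "i \<in> I" "n \<in> I" "m \<in> I"
  have K: "two_sided_ideal (KK i n m)" using KK_ideal[OF inm] .
  have 1: "md (KK i n m) (phi (DeltaC I J (Cadd I J c c')) i n m) (rep (c (i, m)) + rep (c' (i, m)))"
    unfolding Cadd_eq by (rule DELTAC_mk[OF inm])
  have 2: "md (KK i n m) (phi (DeltaC I J c + DeltaC I J c') i n m) (rep (c (i, m)) + rep (c' (i, m)))"
    unfolding phi_add by (rule md_add[OF K DELTAC[OF inm] DELTAC[OF inm]])
  show "md (KK i n m) (phi (DeltaC I J (Cadd I J c c')) i n m) (phi (DeltaC I J c + DeltaC I J c') i n m)"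
    by (rule md3[OF K 1 md_refl[OF K] 2])
qed

lemma img_cong_mk:
  assumes "\<And>k. k \<in> I \<Longrightarrow> P k = mk (F k)" "\<And>k. k \<in> I \<Longrightarrow> Q k = mk (G k)"
  shows "image_mset (\<lambda>k. (P k, Q k)) (mset_set I) = image_mset (\<lambda>k. (mk (F k), mk (G k))) (mset_set I)"
  by (rule image_mset_cong) (use assms fin in auto)

lemma Delta_bimod:
  assumes c: "c \<in> Ccar I J"
  shows "te (DeltaC I J (lact I J (mkA \<alpha>) (ract I J c (mkA \<beta>))))
            (image_mset (\<lambda>(x, y). (lact I J (mkA \<alpha>) x, ract I J y (mkA \<beta>))) (DeltaC I J c))"
proof -
  define \<gamma> where "\<gamma> = (\<lambda>p. rep (c p))"
  have cm: "c = mk \<gamma>" unfolding \<gamma>_def by (rule M_mk[OF c])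
  have lr: "lact I J (mkA \<alpha>) (ract I J c (mkA \<beta>)) = mk (\<lambda>p. \<alpha> (fst p) * (\<gamma> p * \<beta> (snd p)))"
    unfolding cm by (simp add: lact_mk ract_mk)
  have DC: "DeltaC I J c = image_mset (\<lambda>k. (mk (\<lambda>p. \<gamma> (fst p, k)), mk (\<lambda>p. if k = snd p then 1 else 0))) (mset_set I)"
    unfolding DeltaC_def DeltaF_img \<gamma>_def ..
  have img: "image_mset (\<lambda>(x, y). (lact I J (mkA \<alpha>) x, ract I J y (mkA \<beta>))) (DeltaC I J c)
     = image_mset (\<lambda>k. (mk (\<lambda>p. \<alpha> (fst p) * \<gamma> (fst p, k)), mk (\<lambda>p. (if k = snd p then 1 else 0) * \<beta> (snd p)))) (mset_set I)"
    unfolding DC by (simp add: image_mset.compositionality comp_def lact_mk ract_mk)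
  show ?thesis unfolding lr img
  proof (rule ML2)
    show "set_mset (DeltaC I J (mk (\<lambda>p. \<alpha> (fst p) * (\<gamma> p * \<beta> (snd p))))) \<subseteq> Ccar I J \<times> Ccar I J"
      by (rule DeltaC_set)
    show "set_mset (image_mset (\<lambda>k. (mk (\<lambda>p. \<alpha> (fst p) * \<gamma> (fst p, k)), mk (\<lambda>p. (if k = snd p then 1 else 0) * \<beta> (snd p)))) (mset_set I))
       \<subseteq> Ccar I J \<times> Ccar I J" by (auto simp: mk_in)
    fix i n m assume inm: "i \<in> I" "n \<in> I" "m \<in> I"
    have K: "two_sided_ideal (KK i n m)" using KK_ideal[OF inm] .
    have 1: "md (KK i n m) (phi (DeltaC I J (mk (\<lambda>p. \<alpha> (fst p) * (\<gamma> p * \<beta> (snd p))))) i n m)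
        (\<alpha> i * (\<gamma> (i, m) * \<beta> m))"
      using DELTAC_mk[OF inm, of "\<lambda>p. \<alpha> (fst p) * (\<gamma> p * \<beta> (snd p))"] by simp
    have 2: "md (KK i n m) (phi (image_mset (\<lambda>k. (mk (\<lambda>p. \<alpha> (fst p) * \<gamma> (fst p, k)), mk (\<lambda>p. (if k = snd p then 1 else 0) * \<beta> (snd p)))) (mset_set I)) i n m)
       (\<Sum>k\<in>I. (\<alpha> i * \<gamma> (i, k)) * ((if k = m then 1 else 0) * \<beta> m))"
      using PHI_mk[OF inm, where F = "\<lambda>k p. \<alpha> (fst p) * \<gamma> (fst p, k)" and G = "\<lambda>k p. (if k = snd p then 1 else 0) * \<beta> (snd p)"]
      by simp
    have "(\<Sum>k\<in>I. (\<alpha> i * \<gamma> (i, k)) * ((if k = m then 1 else 0) * \<beta> m))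
        = (\<Sum>k\<in>I. if k = m then \<alpha> i * (\<gamma> (i, k) * \<beta> m) else 0)" (is "?S = _")
      by (rule sum.cong) (auto simp: mult.assoc)
    also have "\<dots> = \<alpha> i * (\<gamma> (i, m) * \<beta> m)" using inm fin by simp
    finally have eq: "?S = \<alpha> i * (\<gamma> (i, m) * \<beta> m)" .
    show "md (KK i n m) (phi (DeltaC I J (mk (\<lambda>p. \<alpha> (fst p) * (\<gamma> p * \<beta> (snd p))))) i n m)
       (phi (image_mset (\<lambda>k. (mk (\<lambda>p. \<alpha> (fst p) * \<gamma> (fst p, k)), mk (\<lambda>p. (if k = snd p then 1 else 0) * \<beta> (snd p)))) (mset_set I)) i n m)"
      using md3[OF K 1 md_eq[OF K eq[symmetric]] 2] .
  qed
qed

lemma eps_add: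
  assumes c: "c \<in> Ccar I J" and c': "c' \<in> Ccar I J"
  shows "epsC I J (Cadd I J c c') = Aadd I J (epsC I J c) (epsC I J c')"
  unfolding epsC_eq Aadd_mk
proof (rule mkA_eq)
  fix i assume i: "i \<in> I"
  show "md (J i) (rep (Cadd I J c c' (i, i))) (rep (c (i, i)) + rep (c' (i, i)))"
    unfolding Cadd_eq using rep_mk_diag[OF i, of "\<lambda>p. rep (c p) + rep (c' p)"] by simp
qed

lemma eps_bimod:
  assumes c: "c \<in> Ccar I J"
  shows "epsC I J (lact I J (mkA \<alpha>) (ract I J c (mkA \<beta>))) = Amul I J (mkA \<alpha>) (Amul I J (epsC I J c) (mkA \<beta>))"
proof -
  define \<gamma> where "\<gamma> = (\<lambda>p. rep (c p))"
  have cm: "c = mk \<gamma>" unfolding \<gamma>_def by (rule M_mk[OF c])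
  have lr: "lact I J (mkA \<alpha>) (ract I J c (mkA \<beta>)) = mk (\<lambda>p. \<alpha> (fst p) * (\<gamma> p * \<beta> (snd p)))"
    unfolding cm by (simp add: lact_mk ract_mk)
  show ?thesis unfolding lr epsC_eq Amul_mk
  proof (rule mkA_eq)
    fix i assume i: "i \<in> I"
    show "md (J i) (rep (mk (\<lambda>p. \<alpha> (fst p) * (\<gamma> p * \<beta> (snd p))) (i, i))) (\<alpha> i * (rep (c (i, i)) * \<beta> i))"
      using rep_mk_diag[OF i, of "\<lambda>p. \<alpha> (fst p) * (\<gamma> p * \<beta> (snd p))"] unfolding \<gamma>_def by simp
  qed
qed

end


context cov begin

abbreviation te3 where
  "te3 X Y \<equiv> teq3 (Acar I J) (Ccar I J) (Cadd I J) (lact I J) (ract I J) X Y"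

lemma DC_img: "DeltaC I J c = image_mset (\<lambda>k. (mk (\<lambda>p. rep (c (fst p, k))), mk (\<lambda>p. if k = snd p then 1 else 0))) (mset_set I)"
  unfolding DeltaC_def DeltaF_img ..

lemma coassoc:
  assumes c: "c \<in> Ccar I J"
  shows "te3 (sum_mset (image_mset (\<lambda>(x, y). image_mset (\<lambda>(u, v). (u, v, y)) (DeltaC I J x)) (DeltaC I J c)))
             (sum_mset (image_mset (\<lambda>(x, y). image_mset (\<lambda>(u, v). (x, u, v)) (DeltaC I J y)) (DeltaC I J c)))"
proof -
  define X where "X = (\<lambda>k. mk (\<lambda>p. rep (c (fst p, k))))"
  define e where "e = (\<lambda>k. mk (\<lambda>p. if k = snd p then (1::'b) else 0))"
  define U where "U = mk (\<lambda>_. 1)"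
  have DC: "DeltaC I J c = image_mset (\<lambda>k. (X k, e k)) (mset_set I)"
    unfolding DC_img X_def e_def ..
  have L: "sum_mset (image_mset (\<lambda>(x, y). image_mset (\<lambda>(u, v). (u, v, y)) (DeltaC I J x)) (DeltaC I J c))
     = (\<Sum>k\<in>I. image_mset (\<lambda>(u, v). (u, v, e k)) (DeltaC I J (X k)))"
    unfolding DC by (simp add: image_mset.compositionality comp_def sum_unfold_sum_mset)
  have R: "sum_mset (image_mset (\<lambda>(x, y). image_mset (\<lambda>(u, v). (x, u, v)) (DeltaC I J y)) (DeltaC I J c))
     = (\<Sum>k\<in>I. image_mset (\<lambda>(u, v). (X k, u, v)) (DeltaC I J (e k)))"
    unfolding DC by (simp add: image_mset.compositionality comp_def sum_unfold_sum_mset)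
  have C1: "te (DeltaC I J (X k)) {#(X k, U)#}" for k
  proof (rule ML2)
    show "set_mset (DeltaC I J (X k)) \<subseteq> Ccar I J \<times> Ccar I J" by (rule DeltaC_set)
    show "set_mset {#(X k, U)#} \<subseteq> Ccar I J \<times> Ccar I J" by (simp add: X_def U_def mk_in)
    fix i n m assume inm: "i \<in> I" "n \<in> I" "m \<in> I"
    have K: "two_sided_ideal (KK i n m)" using KK_ideal[OF inm] .
    have 1: "md (KK i n m) (phi (DeltaC I J (X k)) i n m) (rep (c (i, k)))"
      unfolding X_def using DELTAC_mk[OF inm, of "\<lambda>p. rep (c (fst p, k))"] by simp
    have 2: "md (KK i n m) (phi {#(X k, U)#} i n m) (rep (c (i, k)) * 1)"
      unfolding phi_single X_def U_def
      using md_mul[OF K md_mono[OF rep_mk KK_sub(4)[OF inm]] md_mono[OF rep_mk KK_sub(5)[OF inm]],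
          of "\<lambda>p. rep (c (fst p, k))" "\<lambda>_. 1"] inm by simp
    show "md (KK i n m) (phi (DeltaC I J (X k)) i n m) (phi {#(X k, U)#} i n m)"
      using md3[OF K 1 md_refl[OF K] 2[simplified]] .
  qed
  have C2: "te (DeltaC I J (e k)) {#(U, e k)#}" for k
  proof (rule ML2)
    show "set_mset (DeltaC I J (e k)) \<subseteq> Ccar I J \<times> Ccar I J" by (rule DeltaC_set)
    show "set_mset {#(U, e k)#} \<subseteq> Ccar I J \<times> Ccar I J" by (simp add: e_def U_def mk_in)
    fix i n m assume inm: "i \<in> I" "n \<in> I" "m \<in> I"
    have K: "two_sided_ideal (KK i n m)" using KK_ideal[OF inm] .
    have 1: "md (KK i n m) (phi (DeltaC I J (e k)) i n m) (if k = m then 1 else 0)"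
      unfolding e_def using DELTAC_mk[OF inm, of "\<lambda>p. if k = snd p then 1 else 0"] by simp
    have 2: "md (KK i n m) (phi {#(U, e k)#} i n m) (1 * (if k = m then 1 else 0))"
      unfolding phi_single e_def U_def
      using md_mul[OF K md_mono[OF rep_mk KK_sub(4)[OF inm]] md_mono[OF rep_mk KK_sub(5)[OF inm]],
          of "\<lambda>_. 1" "\<lambda>p. if k = snd p then 1 else 0"] inm by simp
    show "md (KK i n m) (phi (DeltaC I J (e k)) i n m) (phi {#(U, e k)#} i n m)"
      using md3[OF K 1 md_refl[OF K] 2[simplified]] .
  qed
  have Xin: "X k \<in> Ccar I J" "e k \<in> Ccar I J" for k unfolding X_def e_def by (rule mk_in)+
  have T: "te3 (image_mset (\<lambda>(u, v). (u, v, e k)) (DeltaC I J (X k)))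
              (image_mset (\<lambda>(u, v). (X k, u, v)) (DeltaC I J (e k)))" for k
  proof -
    have a: "te3 (image_mset (\<lambda>(u, v). (u, v, e k)) (DeltaC I J (X k))) {#(X k, U, e k)#}"
      using lift_right[OF C1 Xin(2), of k] by simp
    have b: "te3 (image_mset (\<lambda>(u, v). (X k, u, v)) (DeltaC I J (e k))) {#(X k, U, e k)#}"
      using lift_left[OF C2 Xin(1), of k] by simp
    show ?thesis using a b unfolding teq3_G by (meson teqG_sym teqG_trans)
  qed
  show ?thesis unfolding L R teq3_G by (rule teqG_sum) (rule T[unfolded teq3_G])
qed

lemma FOLD: "set xs \<subseteq> Ccar I J \<Longrightarrow> foldr (Cadd I J) xs (Czero I J) = mk (\<lambda>p. sum_list (map (\<lambda>z. rep (z p)) xs))"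
proof (induction xs)
  case Nil
  then show ?case by (simp add: Czero_mk)
next
  case (Cons z xs)
  then have "foldr (Cadd I J) (z # xs) (Czero I J) = Cadd I J z (mk (\<lambda>p. sum_list (map (\<lambda>z. rep (z p)) xs)))"
    by simp
  also have "\<dots> = mk (\<lambda>p. rep (z p) + sum_list (map (\<lambda>z. rep (z p)) xs))"
    unfolding Cadd_eq
    by (rule mk_eq) (rule md_add[OF JJ_ideal md_refl[OF JJ_ideal] rep_mk]; assumption)
  finally show ?case by simp
qed

lemma MSUM:
  assumes "set_mset Z \<subseteq> Ccar I J"
  shows "msum (Cadd I J) (Czero I J) Z = mk (\<lambda>p. sum_mset (image_mset (\<lambda>z. rep (z p)) Z))"
proof -
  define xs where "xs = (SOME xs. mset xs = Z)"
  have xs: "mset xs = Z" unfolding xs_def by (rule someI_ex[OF ex_mset])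
  have "msum (Cadd I J) (Czero I J) Z = foldr (Cadd I J) xs (Czero I J)"
    unfolding msum_def xs_def ..
  also have "\<dots> = mk (\<lambda>p. sum_list (map (\<lambda>z. rep (z p)) xs))"
    by (rule FOLD) (use assms xs in auto)
  also have "\<dots> = mk (\<lambda>p. sum_mset (image_mset (\<lambda>z. rep (z p)) Z))"
    unfolding xs[symmetric] by (simp add: sum_mset_sum_list[symmetric])
  finally show ?thesis .
qed

lemma counitL:
  assumes c: "c \<in> Ccar I J"
  shows "msum (Cadd I J) (Czero I J) (image_mset (\<lambda>(x, y). lact I J (epsC I J x) y) (DeltaC I J c)) = c"
proof -
  define X where "X = (\<lambda>k. mk (\<lambda>p. rep (c (fst p, k))))"
  define e where "e = (\<lambda>k. mk (\<lambda>p. if k = snd p then (1::'b) else 0))"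
  have DC: "DeltaC I J c = image_mset (\<lambda>k. (X k, e k)) (mset_set I)"
    unfolding DC_img X_def e_def ..
  have img: "image_mset (\<lambda>(x, y). lact I J (epsC I J x) y) (DeltaC I J c)
      = image_mset (\<lambda>k. lact I J (epsC I J (X k)) (e k)) (mset_set I)"
    unfolding DC by (simp add: image_mset.compositionality comp_def)
  have "msum (Cadd I J) (Czero I J) (image_mset (\<lambda>(x, y). lact I J (epsC I J x) y) (DeltaC I J c))
     = mk (\<lambda>p. \<Sum>k\<in>I. rep (lact I J (epsC I J (X k)) (e k) p))"
    unfolding img by (subst MSUM) (auto simp: lact_in image_mset.compositionality comp_def sum_unfold_sum_mset)
  also have "\<dots> = mk (\<lambda>p. rep (c p))"
  proof (rule mk_eq)
    fix p assume p: "p \<in> I \<times> I"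
    then obtain i m where pp: "p = (i, m)" "i \<in> I" "m \<in> I" by auto
    have K: "two_sided_ideal (JJ J p)" using JJ_ideal[OF p] .
    have le: "lact I J (epsC I J (X k)) (e k) = mk (\<lambda>p. rep (X k (fst p, fst p)) * (if k = snd p then 1 else 0))" for k
      unfolding epsC_eq e_def by (simp add: lact_mk)
    have "md (JJ J p) (\<Sum>k\<in>I. rep (lact I J (epsC I J (X k)) (e k) p)) (\<Sum>k\<in>I. rep (X k (i, i)) * (if k = m then 1 else 0))"
    proof (rule md_sum[OF K])
      fix k assume k: "k \<in> I"
      show "md (JJ J p) (rep (lact I J (epsC I J (X k)) (e k) p)) (rep (X k (i, i)) * (if k = m then 1 else 0))"
        unfolding le using rep_mk[OF p, of "\<lambda>p. rep (X k (fst p, fst p)) * (if k = snd p then 1 else 0)"] pp by simp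
    qed
    also have "(\<Sum>k\<in>I. rep (X k (i, i)) * (if k = m then 1 else 0)) = rep (X m (i, i))"
      using pp fin by (simp add: if_distrib[of "\<lambda>x. _ * x"] cong: if_cong)
    finally have 1: "md (JJ J p) (\<Sum>k\<in>I. rep (lact I J (epsC I J (X k)) (e k) p)) (rep (X m (i, i)))" .
    have 2: "md (JJ J p) (rep (X m (i, i))) (rep (c p))"
      unfolding X_def using md_mono[OF rep_mk_diag[OF pp(2), of "\<lambda>p. rep (c (fst p, m))"] J_sub_JJ(1)[OF pp(2,3)]] pp by simp
    show "md (JJ J p) (\<Sum>k\<in>I. rep (lact I J (epsC I J (X k)) (e k) p)) (rep (c p))"
      by (rule md_trans[OF K 1 2])
  qed
  also have "\<dots> = c" by (rule M_mk[OF c, symmetric])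
  finally show ?thesis .
qed

lemma counitR:
  assumes c: "c \<in> Ccar I J"
  shows "msum (Cadd I J) (Czero I J) (image_mset (\<lambda>(x, y). ract I J x (epsC I J y)) (DeltaC I J c)) = c"
proof -
  define X where "X = (\<lambda>k. mk (\<lambda>p. rep (c (fst p, k))))"
  define e where "e = (\<lambda>k. mk (\<lambda>p. if k = snd p then (1::'b) else 0))"
  have DC: "DeltaC I J c = image_mset (\<lambda>k. (X k, e k)) (mset_set I)"
    unfolding DC_img X_def e_def ..
  have img: "image_mset (\<lambda>(x, y). ract I J x (epsC I J y)) (DeltaC I J c)
      = image_mset (\<lambda>k. ract I J (X k) (epsC I J (e k))) (mset_set I)"
    unfolding DC by (simp add: image_mset.compositionality comp_def)
  have "msum (Cadd I J) (Czero I J) (image_mset (\<lambda>(x, y). ract I J x (epsC I J y)) (DeltaC I J c))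
     = mk (\<lambda>p. \<Sum>k\<in>I. rep (ract I J (X k) (epsC I J (e k)) p))"
    unfolding img by (subst MSUM) (auto simp: ract_in image_mset.compositionality comp_def sum_unfold_sum_mset)
  also have "\<dots> = mk (\<lambda>p. rep (c p))"
  proof (rule mk_eq)
    fix p assume p: "p \<in> I \<times> I"
    then obtain i m where pp: "p = (i, m)" "i \<in> I" "m \<in> I" by auto
    have K: "two_sided_ideal (JJ J p)" using JJ_ideal[OF p] .
    have re: "ract I J (X k) (epsC I J (e k)) = mk (\<lambda>p. rep (c (fst p, k)) * rep (e k (snd p, snd p)))" for k
      unfolding epsC_eq X_def by (simp add: ract_mk)
    have em: "md (JJ J p) (rep (e k (m, m))) (if k = m then 1 else 0)" for k
      unfolding e_def using md_mono[OF rep_mk_diag[OF pp(3), of "\<lambda>p. if k = snd p then 1 else 0"] J_sub_JJ(2)[OF pp(2,3)]] pp by simp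
    have "md (JJ J p) (\<Sum>k\<in>I. rep (ract I J (X k) (epsC I J (e k)) p)) (\<Sum>k\<in>I. rep (c (i, k)) * (if k = m then 1 else 0))"
    proof (rule md_sum[OF K])
      fix k assume k: "k \<in> I"
      have "md (JJ J p) (rep (ract I J (X k) (epsC I J (e k)) p)) (rep (c (i, k)) * rep (e k (m, m)))"
        unfolding re using rep_mk[OF p, of "\<lambda>p. rep (c (fst p, k)) * rep (e k (snd p, snd p))"] pp by simp
      moreover have "md (JJ J p) (rep (c (i, k)) * rep (e k (m, m))) (rep (c (i, k)) * (if k = m then 1 else 0))"
        by (rule md_mul[OF K md_refl[OF K] em])
      ultimately show "md (JJ J p) (rep (ract I J (X k) (epsC I J (e k)) p)) (rep (c (i, k)) * (if k = m then 1 else 0))"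
        by (rule md_trans[OF K])
    qed
    also have "(\<Sum>k\<in>I. rep (c (i, k)) * (if k = m then 1 else 0)) = rep (c p)"
      using pp fin by (simp add: if_distrib[of "\<lambda>x. _ * x"] cong: if_cong)
    finally show "md (JJ J p) (\<Sum>k\<in>I. rep (ract I J (X k) (epsC I J (e k)) p)) (rep (c p))" .
  qed
  also have "\<dots> = c" by (rule M_mk[OF c, symmetric])
  finally show ?thesis .
qed

end


theorem proposition3p3:
  fixes sc :: "'k::field \<Rightarrow> 'b::ring_1 \<Rightarrow> 'b"
    and I :: "'i set" and J :: "'i \<Rightarrow> 'b set"
  assumes "k_algebra sc"
    and "finite I"
    and "\<forall>i\<in>I. two_sided_ideal (J i)"
    and "(\<Inter>i\<in>I. J i) = {0}"
  shows "bimodule (Acar I J) (Aadd I J) (Amul I J) (Aone I J)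
           (Ccar I J) (Cadd I J) (Czero I J) (Cneg I J) (lact I J) (ract I J)
       \<and> (\<forall>c. \<forall>x\<in>Ccar I J. lact I J (kA sc I J c) x = ract I J x (kA sc I J c))
       \<and> (\<forall>b b'. (\<forall>i\<in>I. \<forall>j\<in>I. cos (JJ J (i, j)) (b (i, j)) = cos (JJ J (i, j)) (b' (i, j))) \<longrightarrow>
             teq2 (Acar I J) (Ccar I J) (Cadd I J) (lact I J) (ract I J) (DeltaF I J b) (DeltaF I J b')
           \<and> epsF I J b = epsF I J b')
       \<and> (\<forall>b. teq2 (Acar I J) (Ccar I J) (Cadd I J) (lact I J) (ract I J) (DeltaF I J b) (DeltaF' I J b))
       \<and> coring (Acar I J) (Aadd I J) (Amul I J) (Aone I J)
           (Ccar I J) (Cadd I J) (Czero I J) (Cneg I J) (lact I J) (ract I J)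
           (DeltaC I J) (epsC I J)"
proof -
  interpret cov I J using assms(2,3) by unfold_locales auto
  have cor: "coring (Acar I J) (Aadd I J) (Amul I J) (Aone I J)
           (Ccar I J) (Cadd I J) (Czero I J) (Cneg I J) (lact I J) (ract I J)
           (DeltaC I J) (epsC I J)"
    unfolding coring_def
  proof (intro conjI)
    show "bimodule (Acar I J) (Aadd I J) (Amul I J) (Aone I J)
           (Ccar I J) (Cadd I J) (Czero I J) (Cneg I J) (lact I J) (ract I J)" by (rule bimod)
    show "\<forall>c\<in>Ccar I J. set_mset (DeltaC I J c) \<subseteq> Ccar I J \<times> Ccar I J" using DeltaC_set by blast
    show "\<forall>c\<in>Ccar I J. epsC I J c \<in> Acar I J" by (simp add: epsC_eq mkA_in)
    show "\<forall>c\<in>Ccar I J. \<forall>c'\<in>Ccar I J. te (DeltaC I J (Cadd I J c c')) (DeltaC I J c + DeltaC I J c')"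
      using Delta_add by blast
    show "\<forall>a\<in>Acar I J. \<forall>a'\<in>Acar I J. \<forall>c\<in>Ccar I J. te (DeltaC I J (lact I J a (ract I J c a')))
         (image_mset (\<lambda>(x, y). (lact I J a x, ract I J y a')) (DeltaC I J c))"
      by (intro allA ballI Delta_bimod)
    show "\<forall>c\<in>Ccar I J. \<forall>c'\<in>Ccar I J. epsC I J (Cadd I J c c') = Aadd I J (epsC I J c) (epsC I J c')"
      using eps_add by blast
    show "\<forall>a\<in>Acar I J. \<forall>a'\<in>Acar I J. \<forall>c\<in>Ccar I J.
        epsC I J (lact I J a (ract I J c a')) = Amul I J a (Amul I J (epsC I J c) a')"
      by (intro allA ballI eps_bimod)
    show "\<forall>c\<in>Ccar I J. te3 (sum_mset (image_mset (\<lambda>(x, y). image_mset (\<lambda>(u, v). (u, v, y)) (DeltaC I J x)) (DeltaC I J c)))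
             (sum_mset (image_mset (\<lambda>(x, y). image_mset (\<lambda>(u, v). (x, u, v)) (DeltaC I J y)) (DeltaC I J c)))"
      using coassoc by blast
    show "\<forall>c\<in>Ccar I J. msum (Cadd I J) (Czero I J) (image_mset (\<lambda>(x, y). lact I J (epsC I J x) y) (DeltaC I J c)) = c"
      using counitL by blast
    show "\<forall>c\<in>Ccar I J. msum (Cadd I J) (Czero I J) (image_mset (\<lambda>(x, y). ract I J x (epsC I J y)) (DeltaC I J c)) = c"
      using counitR by blast
  qed
  show ?thesis
    using bimod central[OF assms(1)] welldef DeltaF_F' cor by blast
qed


end
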